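(* Let $\Omega_\Gamma\subset\mathbb{R}^2$ be a bounded simply connected domain with analytic boundary and $\psi$ real-analytic on $\overline{\Omega_\Gamma}$, non-negative, with $\Delta\psi=F(\psi)$ in $\Omega_\Gamma$, where $F\in C([0,1])$ is real-analytic on $(0,1)$, not real-analytic at $0$, and $F(0)=1$; and $\psi=\nabla\psi=0$ on $\partial\Omega_\Gamma$. Then near $0$, $F$ admits the convergent Puiseux expansion $F(s)=\sum_{k\ge0}a_ks^{k/2}$ for $0\le s$ sufficiently small, with real $a_k$, $a_0=1$, and $a_{k}\ne0$ for at least one odd $k$. *)

theory Defs
  imports "HOL-Analysis.Analysis"
begin

definition real_analytic_at :: "(real \<Rightarrow> real) \<Rightarrow> real \<Rightarrow> bool" where
  "real_analytic_at f x0 \<longleftrightarrow>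
     (\<exists>c :: nat \<Rightarrow> real. \<exists>r > 0. \<forall>x. \<bar>x - x0\<bar> < r \<longrightarrow>
        (\<lambda>n. c n * (x - x0) ^ n) sums f x)"

text \<open>Real-analyticity at 0 of a function only given on [0,1] (one-sided):
  given near 0 (on [0,r)) by a convergent power series.\<close>
definition real_analytic_at_0_right :: "(real \<Rightarrow> real) \<Rightarrow> bool" where
  "real_analytic_at_0_right f \<longleftrightarrow>
     (\<exists>c :: nat \<Rightarrow> real. \<exists>r > 0. \<forall>x. 0 \<le> x \<and> x < r \<longrightarrow>
        (\<lambda>n. c n * x ^ n) sums f x)"

definition real_analytic_at2 :: "(real \<times> real \<Rightarrow> real) \<Rightarrow> real \<times> real \<Rightarrow> bool" where
  "real_analytic_at2 f p0 \<longleftrightarrow>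
     (\<exists>c :: nat \<Rightarrow> nat \<Rightarrow> real. \<exists>r > 0. \<forall>x y. dist (x, y) p0 < r \<longrightarrow>
        ((\<lambda>(i, j). c i j * (x - fst p0) ^ i * (y - snd p0) ^ j) has_sum f (x, y)) UNIV)"

definition laplacian :: "(real \<times> real \<Rightarrow> real) \<Rightarrow> real \<times> real \<Rightarrow> real" where
  "laplacian f p =
     deriv (\<lambda>s. deriv (\<lambda>s'. f (s', snd p)) s) (fst p)
   + deriv (\<lambda>t. deriv (\<lambda>t'. f (fst p, t')) t) (snd p)"

definition analytic_boundary :: "(real \<times> real) set \<Rightarrow> bool" where
  "analytic_boundary \<Omega> \<longleftrightarrow>
     (\<exists>\<gamma> :: real \<Rightarrow> real \<times> real.
        (\<forall>t. real_analytic_at (\<lambda>s. fst (\<gamma> s)) t \<and> real_analytic_at (\<lambda>s. snd (\<gamma> s)) t) \<and>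
        (\<forall>t. \<gamma> (t + 1) = \<gamma> t) \<and>
        inj_on \<gamma> {0..<1} \<and>
        (\<forall>t. \<exists>v. v \<noteq> 0 \<and> (\<gamma> has_vector_derivative v) (at t)) \<and>
        frontier \<Omega> = \<gamma> ` {0..1})"

end

theory Submission
  imports Defs "HOL-Complex_Analysis.Complex_Analysis"
begin

definition ds :: "(nat \<Rightarrow> nat \<Rightarrow> real) \<Rightarrow> real \<Rightarrow> real \<Rightarrow> real" where
  "ds c x y = (\<Sum>\<^sub>\<infinity>(i,j). c i j * x^i * y^j)"

lemma AS_abs:
  fixes c :: "nat \<Rightarrow> nat \<Rightarrow> real" and x y \<rho> :: real
  assumes AS: "(\<lambda>(i,j). \<bar>c i j\<bar> * \<rho>^(i+j)) summable_on UNIV"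
    and x: "\<bar>x\<bar> \<le> \<rho>" and y: "\<bar>y\<bar> \<le> \<rho>"
  shows "(\<lambda>ij. norm ((\<lambda>(i,j). c i j * x^i * y^j) ij)) summable_on UNIV"
proof -
  have "(\<lambda>ij. norm ((\<lambda>(i,j). \<bar>c i j\<bar> * \<rho>^(i+j)) ij)) summable_on UNIV"
    using summable_on_iff_abs_summable_on_real[THEN iffD1, OF AS] .
  then show ?thesis
  proof (rule Infinite_Sum.abs_summable_on_comparison_test)
    fix ij :: "nat \<times> nat" obtain i j where ij: "ij = (i,j)" by fastforce
    have r: "0 \<le> \<rho>" using x by linarith
    have "\<bar>c i j * x^i * y^j\<bar> = \<bar>c i j\<bar> * \<bar>x\<bar>^i * \<bar>y\<bar>^j" by (simp add: abs_mult power_abs)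
    also have "\<dots> \<le> \<bar>c i j\<bar> * \<rho>^i * \<rho>^j"
      using x y r by (intro mult_left_mono mult_mono power_mono) auto
    also have "\<dots> = \<bar>\<bar>c i j\<bar> * \<rho>^(i+j)\<bar>" using r by (simp add: power_add abs_mult)
    finally show "norm ((\<lambda>(i,j). c i j * x^i * y^j) ij) \<le> norm ((\<lambda>(i,j). \<bar>c i j\<bar> * \<rho>^(i+j)) ij)"
      by (simp add: ij)
  qed
qed

lemma ds_has_sum:
  fixes c :: "nat \<Rightarrow> nat \<Rightarrow> real" and x y \<rho> :: real
  assumes AS: "(\<lambda>(i,j). \<bar>c i j\<bar> * \<rho>^(i+j)) summable_on UNIV"
    and x: "\<bar>x\<bar> \<le> \<rho>" and y: "\<bar>y\<bar> \<le> \<rho>"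
  shows "((\<lambda>(i,j). c i j * x^i * y^j) has_sum ds c x y) UNIV"
  unfolding ds_def
  by (rule has_sum_infsum, rule abs_summable_summable, rule AS_abs[OF assms])


lemma AS_row:
  fixes c :: "nat \<Rightarrow> nat \<Rightarrow> real" and y \<rho> :: real
  assumes AS: "(\<lambda>(i,j). \<bar>c i j\<bar> * \<rho>^(i+j)) summable_on UNIV"
    and r: "\<rho> > 0" and y: "\<bar>y\<bar> \<le> \<rho>"
  shows "(\<lambda>j. c i j * y^j) summable_on UNIV"
proof -
  have A: "(\<lambda>ij. norm ((\<lambda>(i,j). c i j * \<rho>^i * y^j) ij)) summable_on UNIV"
    using AS_abs[OF AS _ y, of \<rho>] r by simp
  have A2: "(\<lambda>(i,j). norm (c i j * \<rho>^i * y^j)) summable_on Sigma UNIV (\<lambda>_. UNIV)"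
    using A by (simp add: case_prod_unfold)
  have "(\<lambda>j. norm (c i j * \<rho>^i * y^j)) summable_on UNIV"
    using summable_on_SigmaD1[OF A2, of i] by simp
  then have "(\<lambda>j. c i j * \<rho>^i * y^j) summable_on UNIV"
    using summable_on_iff_abs_summable_on_real by blast
  then have "(\<lambda>j. inverse (\<rho>^i) * (c i j * \<rho>^i * y^j)) summable_on UNIV"
    by (rule summable_on_cmult_right)
  moreover have "\<And>j. inverse (\<rho>^i) * (c i j * \<rho>^i * y^j) = c i j * y^j"
    using r by (simp add: field_simps)
  ultimately show ?thesis by simp
qed

lemma ds_rows:
  fixes c :: "nat \<Rightarrow> nat \<Rightarrow> real" and x y \<rho> :: real
  assumes AS: "(\<lambda>(i,j). \<bar>c i j\<bar> * \<rho>^(i+j)) summable_on UNIV"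
    and r: "\<rho> > 0" and x: "\<bar>x\<bar> \<le> \<rho>" and y: "\<bar>y\<bar> \<le> \<rho>"
  shows "((\<lambda>i. (\<Sum>\<^sub>\<infinity>j. c i j * y^j) * x^i) has_sum ds c x y) UNIV"
proof -
  have H: "((\<lambda>(i,j). c i j * x^i * y^j) has_sum ds c x y) (Sigma UNIV (\<lambda>_. UNIV))"
    using ds_has_sum[OF AS x y] by simp
  show ?thesis
  proof (rule has_sum_Sigma'[OF H])
    fix i :: nat
    have "((\<lambda>j. c i j * y^j) has_sum (\<Sum>\<^sub>\<infinity>j. c i j * y^j)) UNIV"
      using AS_row[OF AS r y] by (rule has_sum_infsum)
    then have "((\<lambda>j. x^i * (c i j * y^j)) has_sum x^i * (\<Sum>\<^sub>\<infinity>j. c i j * y^j)) UNIV"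
      by (rule has_sum_cmult_right)
    then show "((\<lambda>j. (\<lambda>(i,j). c i j * x^i * y^j) (i, j)) has_sum (\<Sum>\<^sub>\<infinity>j. c i j * y^j) * x^i) UNIV"
      by (simp add: ac_simps)
  qed
qed

lemma bij_diag: "bij_betw (\<lambda>(m,i). (i, m - i)) (Sigma UNIV (\<lambda>m. {..m})) (UNIV :: (nat\<times>nat) set)"
  by (rule bij_betwI[where g="\<lambda>(i,j). (i+j, i)"]) auto

lemma diag_has_sum:
  fixes f :: "nat \<times> nat \<Rightarrow> real"
  assumes "(f has_sum S) UNIV"
  shows "((\<lambda>m. \<Sum>i\<le>m. f (i, m - i)) has_sum S) UNIV"
proof -
  have "((\<lambda>z. f ((\<lambda>(m,i). (i, m - i)) z)) has_sum S) (Sigma UNIV (\<lambda>m. {..m}))"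
    using has_sum_reindex_bij_betw[OF bij_diag] assms by blast
  then show ?thesis
  proof (rule has_sum_Sigma')
    fix m :: nat
    show "((\<lambda>i. (\<lambda>z. f ((\<lambda>(m,i). (i, m - i)) z)) (m, i)) has_sum (\<Sum>i\<le>m. f (i, m - i))) {..m}"
      by (simp add: has_sum_finite)
  qed
qed

definition lc :: "(nat \<Rightarrow> nat \<Rightarrow> real) \<Rightarrow> real \<Rightarrow> real \<Rightarrow> nat \<Rightarrow> real" where
  "lc c a b m = (\<Sum>i\<le>m. c i (m-i) * a^i * b^(m-i))"

lemma ds_line:
  fixes c :: "nat \<Rightarrow> nat \<Rightarrow> real" and a b t \<rho> :: real
  assumes AS: "(\<lambda>(i,j). \<bar>c i j\<bar> * \<rho>^(i+j)) summable_on UNIV"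
    and a: "\<bar>a\<bar> \<le> 1" and b: "\<bar>b\<bar> \<le> 1" and t: "\<bar>t\<bar> \<le> \<rho>"
  shows "(\<lambda>m. lc c a b m * t^m) sums ds c (t*a) (t*b)"
proof -
  have r: "0 \<le> \<rho>" using t by linarith
  have xa: "\<bar>t*a\<bar> \<le> \<rho>" using a t r by (simp add: abs_mult mult_le_one) (metis abs_ge_zero mult_left_le mult.commute order_trans)
  have xb: "\<bar>t*b\<bar> \<le> \<rho>" using b t r by (simp add: abs_mult) (metis abs_ge_zero mult_left_le mult.commute order_trans)
  have "((\<lambda>m. \<Sum>i\<le>m. (\<lambda>(i,j). c i j * (t*a)^i * (t*b)^j) (i, m - i)) has_sum ds c (t*a) (t*b)) UNIV"
    by (rule diag_has_sum[OF ds_has_sum[OF AS xa xb]])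
  moreover have "(\<Sum>i\<le>m. (\<lambda>(i,j). c i j * (t*a)^i * (t*b)^j) (i, m - i)) = lc c a b m * t^m" for m
  proof -
    have "(\<Sum>i\<le>m. (\<lambda>(i,j). c i j * (t*a)^i * (t*b)^j) (i, m - i)) = (\<Sum>i\<le>m. c i (m-i) * a^i * b^(m-i) * t^m)"
    proof (rule sum.cong[OF refl])
      fix i assume "i \<in> {..m}"
      then have "t^i * t^(m-i) = t^m" by (simp add: power_add[symmetric])
      then show "(\<lambda>(i,j). c i j * (t*a)^i * (t*b)^j) (i, m - i) = c i (m-i) * a^i * b^(m-i) * t^m"
        by (simp add: power_mult_distrib)
    qed
    then show ?thesis by (simp add: lc_def sum_distrib_right)
  qed
  ultimately show ?thesis using has_sum_imp_sums by simp
qed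

lemma lc_bound:
  fixes c :: "nat \<Rightarrow> nat \<Rightarrow> real" and a b \<rho> :: real
  assumes AS: "(\<lambda>(i,j). \<bar>c i j\<bar> * \<rho>^(i+j)) summable_on UNIV"
    and a: "\<bar>a\<bar> \<le> 1" and b: "\<bar>b\<bar> \<le> 1" and r: "\<rho> \<ge> 0"
  shows "summable (\<lambda>m. \<bar>lc c a b m\<bar> * \<rho>^m)"
proof -
  obtain S where "((\<lambda>(i,j). \<bar>c i j\<bar> * \<rho>^(i+j)) has_sum S) UNIV" using AS summable_on_def by blast
  then have "((\<lambda>m. \<Sum>i\<le>m. (\<lambda>(i,j). \<bar>c i j\<bar> * \<rho>^(i+j)) (i, m - i)) has_sum S) UNIV"
    by (rule diag_has_sum)
  then have s: "summable (\<lambda>m. \<Sum>i\<le>m. (\<lambda>(i,j). \<bar>c i j\<bar> * \<rho>^(i+j)) (i, m - i))"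
    using has_sum_imp_sums sums_summable by blast
  show ?thesis
  proof (rule summable_comparison_test[OF _ s], intro exI allI impI)
    fix m :: nat
    have "\<bar>lc c a b m\<bar> \<le> (\<Sum>i\<le>m. \<bar>c i (m-i) * a^i * b^(m-i)\<bar>)"
      unfolding lc_def by (rule sum_abs)
    also have "\<dots> \<le> (\<Sum>i\<le>m. \<bar>c i (m-i)\<bar>)"
    proof (rule sum_mono)
      fix i
      have "\<bar>a^i\<bar> \<le> 1" "\<bar>b^(m-i)\<bar> \<le> 1" using a b by (simp_all add: power_abs power_le_one)
      then have "\<bar>a^i\<bar> * \<bar>b^(m-i)\<bar> \<le> 1" by (intro mult_le_one) auto
      then have "\<bar>c i (m-i)\<bar> * (\<bar>a^i\<bar> * \<bar>b^(m-i)\<bar>) \<le> \<bar>c i (m-i)\<bar>"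
        by (rule mult_left_le) simp
      then show "\<bar>c i (m-i) * a^i * b^(m-i)\<bar> \<le> \<bar>c i (m-i)\<bar>"
        by (simp add: abs_mult mult.assoc)
    qed
    finally have "\<bar>lc c a b m\<bar> * \<rho>^m \<le> (\<Sum>i\<le>m. \<bar>c i (m-i)\<bar>) * \<rho>^m"
      using r by (simp add: mult_right_mono)
    also have "\<dots> = (\<Sum>i\<le>m. (\<lambda>(i,j). \<bar>c i j\<bar> * \<rho>^(i+j)) (i, m - i))"
      by (simp add: sum_distrib_right)
    finally show "norm (\<bar>lc c a b m\<bar> * \<rho>^m) \<le> (\<Sum>i\<le>m. (\<lambda>(i,j). \<bar>c i j\<bar> * \<rho>^(i+j)) (i, m - i))"
      using r by simp
  qed
qed


lemma quad_le_pow: "(i+1)*(i+2) \<le> 3 * (2::nat)^i"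
proof (induction i)
  case 0 then show ?case by simp
next
  case (Suc i)
  show ?case
  proof (cases i)
    case 0 then show ?thesis by simp
  next
    case (Suc k)
    have "(Suc i + 1) * (Suc i + 2) \<le> 2 * ((i+1)*(i+2))" using Suc by simp
    also have "\<dots> \<le> 2 * (3 * 2^i)" using Suc.IH by simp
    finally show ?thesis by simp
  qed
qed

definition d2 :: "(nat \<Rightarrow> nat \<Rightarrow> real) \<Rightarrow> nat \<Rightarrow> nat \<Rightarrow> real" where
  "d2 c i j = real ((i+1)*(i+2)) * c (i+2) j"

lemma AS_d2:
  fixes c :: "nat \<Rightarrow> nat \<Rightarrow> real" and \<rho> :: real
  assumes AS: "(\<lambda>(i,j). \<bar>c i j\<bar> * \<rho>^(i+j)) summable_on UNIV" and r: "\<rho> > 0"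
  shows "(\<lambda>(i,j). \<bar>d2 c i j\<bar> * (\<rho>/2)^(i+j)) summable_on UNIV"
proof -
  have inj: "inj_on (\<lambda>(i::nat,j::nat). (i+2, j)) UNIV" by (auto simp: inj_on_def)
  have "(\<lambda>(i,j). \<bar>c i j\<bar> * \<rho>^(i+j)) summable_on ((\<lambda>(i::nat,j::nat). (i+2, j)) ` UNIV)"
    using AS by (rule summable_on_subset) simp
  then have "((\<lambda>(i,j). \<bar>c i j\<bar> * \<rho>^(i+j)) \<circ> (\<lambda>(i::nat,j::nat). (i+2, j))) summable_on UNIV"
    using summable_on_reindex[OF inj] by blast
  then have S: "(\<lambda>(i,j). \<bar>c (i+2) j\<bar> * \<rho>^(i+2+j)) summable_on UNIV"
    by (simp add: o_def case_prod_unfold)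
  have S2: "(\<lambda>ij. 3 / \<rho>^2 * (\<lambda>(i,j). \<bar>c (i+2) j\<bar> * \<rho>^(i+2+j)) ij) summable_on UNIV"
    by (rule summable_on_cmult_right[OF S])
  show ?thesis
  proof (rule summable_on_comparison_test[OF S2])
    fix ij :: "nat \<times> nat" obtain i j where ij: "ij = (i,j)" by fastforce
    have p2: "(2::real)^i \<le> 2^(i+j)" by (rule power_increasing) auto
    have q: "real ((i+1)*(i+2)) \<le> 3 * 2^(i+j)"
    proof -
      have "real ((i+1)*(i+2)) \<le> real (3 * 2^i)" using quad_le_pow[of i] by linarith
      also have "\<dots> = 3 * 2^i" by simp
      also have "\<dots> \<le> 3 * 2^(i+j)" using p2 by simp
      finally show ?thesis .
    qed
    have "\<bar>d2 c i j\<bar> * (\<rho>/2)^(i+j) = \<bar>c (i+2) j\<bar> * (real ((i+1)*(i+2)) * \<rho>^(i+j) / 2^(i+j))"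
      by (simp add: d2_def abs_mult power_divide)
    also have "\<dots> \<le> \<bar>c (i+2) j\<bar> * (3 * \<rho>^(i+j))"
    proof (rule mult_left_mono)
      have "real ((i+1)*(i+2)) * \<rho>^(i+j) \<le> 3 * 2^(i+j) * \<rho>^(i+j)"
        using q r by (intro mult_right_mono) auto
      then show "real ((i+1)*(i+2)) * \<rho>^(i+j) / 2^(i+j) \<le> 3 * \<rho>^(i+j)"
        by (simp add: divide_le_eq mult_ac)
    qed simp
    also have "\<dots> = 3 / \<rho>^2 * (\<bar>c (i+2) j\<bar> * \<rho>^(i+2+j))"
      using r by (simp add: power_add field_simps power2_eq_square)
    finally show "(\<lambda>(i,j). \<bar>d2 c i j\<bar> * (\<rho>/2)^(i+j)) ij \<le> 3 / \<rho>^2 * (\<lambda>(i,j). \<bar>c (i+2) j\<bar> * \<rho>^(i+2+j)) ij"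
      by (simp add: ij)
    show "0 \<le> (\<lambda>(i,j). \<bar>d2 c i j\<bar> * (\<rho>/2)^(i+j)) ij" using r by (simp add: ij)
  qed
qed

lemma dd_first:
  fixes c :: "nat \<Rightarrow> nat \<Rightarrow> real" and \<rho> s0 x y :: real and \<phi> :: "real \<Rightarrow> real"
  assumes AS: "(\<lambda>(i,j). \<bar>c i j\<bar> * \<rho>^(i+j)) summable_on UNIV" and r: "\<rho> > 0"
    and x: "\<bar>x\<bar> \<le> \<rho>/2" and y: "\<bar>y\<bar> \<le> \<rho>/2"
    and phi: "\<And>s. \<bar>s - s0\<bar> < \<rho> \<Longrightarrow> \<phi> s = ds c (s - s0) y"
  shows "deriv (\<lambda>s. deriv \<phi> s) (s0 + x) = ds (d2 c) x y"
proof -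
  define A where "A i = (\<Sum>\<^sub>\<infinity>j. c i j * y^j)" for i
  have y': "\<bar>y\<bar> \<le> \<rho>" using y r by linarith
  have sA: "(\<lambda>i. A i * u^i) sums ds c u y" if "\<bar>u\<bar> \<le> \<rho>" for u
    using has_sum_imp_sums[OF ds_rows[OF AS r that y']] by (simp add: A_def)
  have smA: "summable (\<lambda>i. A i * \<rho>^i)" using sA[of \<rho>] r sums_summable by auto
  have smA': "summable (\<lambda>i. A i * u^i)" if "norm u < \<rho>" for u
    using sA[of u] that sums_summable by auto
  define D1 where "D1 u = (\<Sum>n. diffs A n * u^n)" for u
  define D2 where "D2 u = (\<Sum>n. diffs (diffs A) n * u^n)" for u
  have dphi: "deriv \<phi> s = D1 (s - s0)" if s: "\<bar>s - s0\<bar> < \<rho>" for s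
  proof -
    have "DERIV (\<lambda>u. \<Sum>n. A n * u^n) (s - s0) :> D1 (s - s0)"
      unfolding D1_def by (rule termdiffs_strong[OF smA]) (use s r in simp)
    then have "DERIV (\<lambda>s. (\<Sum>n. A n * (s - s0)^n)) s :> D1 (s - s0) * 1"
      by (rule DERIV_chain2) (auto intro!: derivative_eq_intros)
    then have "DERIV (\<lambda>s. (\<Sum>n. A n * (s - s0)^n)) s :> D1 (s - s0)" by simp
    then have "DERIV \<phi> s :> D1 (s - s0)"
    proof (rule has_field_derivative_transform_within_open[where S="ball s0 \<rho>"], simp_all)
      show "dist s0 s < \<rho>" using s by (simp add: dist_real_def abs_minus_commute)
      fix z assume "dist s0 z < \<rho>"
      then have "\<bar>z - s0\<bar> < \<rho>" by (simp add: dist_real_def abs_minus_commute)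
      then show "(\<Sum>n. A n * (z - s0)^n) = \<phi> z"
        using phi[of z] sA[of "z - s0"] sums_unique by fastforce
    qed
    then show ?thesis by (rule DERIV_imp_deriv)
  qed
  have smD: "summable (\<lambda>n. diffs A n * (3*\<rho>/4)^n)"
    by (rule termdiff_converges[where K=\<rho>]) (use r smA' in auto)
  have "DERIV D1 x :> D2 x"
    unfolding D1_def D2_def by (rule termdiffs_strong[OF smD]) (use x r in simp)
  then have "DERIV (\<lambda>s. D1 (s - s0)) (s0 + x) :> D2 x * 1"
    by (intro DERIV_chain2[where g="\<lambda>s. s - s0", of D1, simplified]) (auto intro!: derivative_eq_intros)
  then have "DERIV (\<lambda>s. D1 (s - s0)) (s0 + x) :> D2 x" by simp
  then have "DERIV (\<lambda>s. deriv \<phi> s) (s0 + x) :> D2 x"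
    by (rule has_field_derivative_transform_within_open[where S="ball s0 \<rho>"])
       (use x r dphi in \<open>auto simp: dist_real_def abs_minus_commute\<close>)
  then have 1: "deriv (\<lambda>s. deriv \<phi> s) (s0 + x) = D2 x" by (rule DERIV_imp_deriv)
  have AS2: "(\<lambda>(i,j). \<bar>d2 c i j\<bar> * (\<rho>/2)^(i+j)) summable_on UNIV" by (rule AS_d2[OF AS r])
  have "((\<lambda>i. (\<Sum>\<^sub>\<infinity>j. d2 c i j * y^j) * x^i) has_sum ds (d2 c) x y) UNIV"
    by (rule ds_rows[OF AS2]) (use r x y in auto)
  moreover have "(\<Sum>\<^sub>\<infinity>j. d2 c i j * y^j) = diffs (diffs A) i" for i
  proof -
    have "(\<Sum>\<^sub>\<infinity>j. d2 c i j * y^j) = (\<Sum>\<^sub>\<infinity>j. real ((i+1)*(i+2)) * (c (i+2) j * y^j))"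
      by (simp add: d2_def mult.assoc)
    also have "\<dots> = real ((i+1)*(i+2)) * A (i+2)"
      unfolding A_def by (rule infsum_cmult_right')
    also have "\<dots> = diffs (diffs A) i" by (simp add: diffs_def algebra_simps)
    finally show ?thesis .
  qed
  ultimately have "(\<lambda>i. diffs (diffs A) i * x^i) sums ds (d2 c) x y"
    using has_sum_imp_sums by simp
  then show ?thesis using 1 sums_unique[of "\<lambda>i. diffs (diffs A) i * x ^ i"] by (simp add: D2_def)
qed


lemma bij_swap2: "bij_betw (\<lambda>(i::nat,j::nat). (j,i)) UNIV UNIV"
  by (rule bij_betwI[where g="\<lambda>(i,j). (j,i)"]) auto

lemma ds_swap: "ds c x y = ds (\<lambda>i j. c j i) y x"
proof -
  have "ds (\<lambda>i j. c j i) y x = (\<Sum>\<^sub>\<infinity>z. (\<lambda>(i,j). c i j * x^i * y^j) ((\<lambda>(i,j). (j,i)) z))"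
    unfolding ds_def by (rule infsum_cong) (auto simp: mult_ac)
  also have "\<dots> = ds c x y" unfolding ds_def by (rule infsum_reindex_bij_betw[OF bij_swap2])
  finally show ?thesis by simp
qed

lemma AS_swap:
  fixes c :: "nat \<Rightarrow> nat \<Rightarrow> real"
  assumes "(\<lambda>(i,j). \<bar>c i j\<bar> * \<rho>^(i+j)) summable_on UNIV"
  shows "(\<lambda>(i,j). \<bar>c j i\<bar> * \<rho>^(i+j)) summable_on UNIV"
proof -
  have "(\<lambda>(i,j). \<bar>c i j\<bar> * \<rho>^(i+j)) summable_on (UNIV \<times> UNIV)" using assms by simp
  then have "(\<lambda>(x,y). (\<lambda>(i,j). \<bar>c i j\<bar> * \<rho>^(i+j)) (y,x)) summable_on (UNIV \<times> UNIV)"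
    using summable_on_swap by blast
  then show ?thesis by (simp add: add.commute)
qed

definition lapc :: "(nat \<Rightarrow> nat \<Rightarrow> real) \<Rightarrow> nat \<Rightarrow> nat \<Rightarrow> real" where
  "lapc c i j = d2 c i j + d2 (\<lambda>i j. c j i) j i"

lemma AS_lapc:
  fixes c :: "nat \<Rightarrow> nat \<Rightarrow> real" and \<rho> :: real
  assumes AS: "(\<lambda>(i,j). \<bar>c i j\<bar> * \<rho>^(i+j)) summable_on UNIV" and r: "\<rho> > 0"
  shows "(\<lambda>(i,j). \<bar>lapc c i j\<bar> * (\<rho>/2)^(i+j)) summable_on UNIV"
proof -
  have 1: "(\<lambda>(i,j). \<bar>d2 c i j\<bar> * (\<rho>/2)^(i+j)) summable_on UNIV" by (rule AS_d2[OF AS r])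
  have 2: "(\<lambda>(i,j). \<bar>d2 (\<lambda>i j. c j i) j i\<bar> * (\<rho>/2)^(i+j)) summable_on UNIV"
    using AS_swap[OF AS_d2[OF AS_swap[OF AS] r]] .
  have 3: "(\<lambda>ij. (\<lambda>(i,j). \<bar>d2 c i j\<bar> * (\<rho>/2)^(i+j)) ij + (\<lambda>(i,j). \<bar>d2 (\<lambda>i j. c j i) j i\<bar> * (\<rho>/2)^(i+j)) ij) summable_on UNIV"
    by (rule summable_on_add[OF 1 2])
  show ?thesis
  proof (rule summable_on_comparison_test[OF 3])
    fix ij :: "nat \<times> nat" obtain i j where ij: "ij = (i,j)" by fastforce
    have "\<bar>lapc c i j\<bar> * (\<rho>/2)^(i+j) \<le> (\<bar>d2 c i j\<bar> + \<bar>d2 (\<lambda>i j. c j i) j i\<bar>) * (\<rho>/2)^(i+j)"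
      unfolding lapc_def by (rule mult_right_mono) (use r in auto)
    then show "(\<lambda>(i,j). \<bar>lapc c i j\<bar> * (\<rho>/2)^(i+j)) ij \<le> (\<lambda>(i,j). \<bar>d2 c i j\<bar> * (\<rho>/2)^(i+j)) ij + (\<lambda>(i,j). \<bar>d2 (\<lambda>i j. c j i) j i\<bar> * (\<rho>/2)^(i+j)) ij"
      by (simp add: ij distrib_right)
    show "0 \<le> (\<lambda>(i,j). \<bar>lapc c i j\<bar> * (\<rho>/2)^(i+j)) ij" using r by (simp add: ij)
  qed
qed

lemma lap_ds:
  fixes c :: "nat \<Rightarrow> nat \<Rightarrow> real" and \<rho> x y :: real and \<psi> :: "real \<times> real \<Rightarrow> real" and p :: "real \<times> real"
  assumes AS: "(\<lambda>(i,j). \<bar>c i j\<bar> * \<rho>^(i+j)) summable_on UNIV" and r: "\<rho> > 0"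
    and psi: "\<And>x y. \<bar>x\<bar> < \<rho> \<Longrightarrow> \<bar>y\<bar> < \<rho> \<Longrightarrow> \<psi> (fst p + x, snd p + y) = ds c x y"
    and x: "\<bar>x\<bar> \<le> \<rho>/2" and y: "\<bar>y\<bar> \<le> \<rho>/2"
  shows "laplacian \<psi> (fst p + x, snd p + y) = ds (lapc c) x y"
proof -
  have y': "\<bar>y\<bar> < \<rho>" and x': "\<bar>x\<bar> < \<rho>" using x y r by linarith+
  have L1: "deriv (\<lambda>s. deriv (\<lambda>s'. \<psi> (s', snd p + y)) s) (fst p + x) = ds (d2 c) x y"
  proof (rule dd_first[OF AS r x y])
    fix s assume "\<bar>s - fst p\<bar> < \<rho>"
    then show "\<psi> (s, snd p + y) = ds c (s - fst p) y" using psi[of "s - fst p" y] y' by simp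
  qed
  have L2: "deriv (\<lambda>t. deriv (\<lambda>t'. \<psi> (fst p + x, t')) t) (snd p + y) = ds (d2 (\<lambda>i j. c j i)) y x"
  proof (rule dd_first[OF AS_swap[OF AS] r y x])
    fix t assume "\<bar>t - snd p\<bar> < \<rho>"
    then show "\<psi> (fst p + x, t) = ds (\<lambda>i j. c j i) (t - snd p) x"
      using psi[of x "t - snd p"] x' ds_swap[of c x "t - snd p"] by simp
  qed
  have h1: "((\<lambda>(i,j). d2 c i j * x^i * y^j) has_sum ds (d2 c) x y) UNIV"
    by (rule ds_has_sum[OF AS_d2[OF AS r] x y])
  have h2: "((\<lambda>(i,j). d2 (\<lambda>i j. c j i) j i * x^i * y^j) has_sum ds (\<lambda>i j. d2 (\<lambda>i j. c j i) j i) x y) UNIV"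
    by (rule ds_has_sum[OF AS_swap[OF AS_d2[OF AS_swap[OF AS] r]] x y])
  have "((\<lambda>ij. (\<lambda>(i,j). d2 c i j * x^i * y^j) ij + (\<lambda>(i,j). d2 (\<lambda>i j. c j i) j i * x^i * y^j) ij) has_sum
         (ds (d2 c) x y + ds (\<lambda>i j. d2 (\<lambda>i j. c j i) j i) x y)) UNIV"
    by (rule has_sum_add[OF h1 h2])
  then have "((\<lambda>(i,j). lapc c i j * x^i * y^j) has_sum (ds (d2 c) x y + ds (\<lambda>i j. d2 (\<lambda>i j. c j i) j i) x y)) UNIV"
    by (simp add: lapc_def case_prod_unfold distrib_right)
  then have "ds (lapc c) x y = ds (d2 c) x y + ds (\<lambda>i j. d2 (\<lambda>i j. c j i) j i) x y"
    unfolding ds_def by (rule infsumI)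
  moreover have "ds (d2 (\<lambda>i j. c j i)) y x = ds (\<lambda>i j. d2 (\<lambda>i j. c j i) j i) x y"
    by (rule ds_swap)
  ultimately show ?thesis using L1 L2 by (simp add: laplacian_def)
qed


lemma lc0: "lc c a b 0 = c 0 0" by (simp add: lc_def)
lemma lc1: "lc c a b 1 = c 0 1 * b + c 1 0 * a" by (simp add: lc_def)
lemma lc2: "lc c a b 2 = c 0 2 * b^2 + c 1 1 * a * b + c 2 0 * a^2"
  by (simp add: lc_def numeral_2_eq_2 atMost_Suc power2_eq_square)
lemma lapc00: "lapc c 0 0 = 2 * c 2 0 + 2 * c 0 2" by (simp add: lapc_def d2_def numeral_2_eq_2)

definition Ec :: "(nat \<Rightarrow> nat \<Rightarrow> real) \<Rightarrow> nat \<Rightarrow> real" where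
  "Ec c m = (\<Sum>i\<le>m. \<bar>c i (m-i)\<bar>)"

lemma lc_le_Ec:
  assumes a: "\<bar>a\<bar> \<le> 1" and b: "\<bar>b\<bar> \<le> 1"
  shows "\<bar>lc c a b m\<bar> \<le> Ec c m"
proof -
  have "\<bar>lc c a b m\<bar> \<le> (\<Sum>i\<le>m. \<bar>c i (m-i) * a^i * b^(m-i)\<bar>)"
    unfolding lc_def by (rule sum_abs)
  also have "\<dots> \<le> (\<Sum>i\<le>m. \<bar>c i (m-i)\<bar>)"
  proof (rule sum_mono)
    fix i
    have "\<bar>a^i\<bar> \<le> 1" "\<bar>b^(m-i)\<bar> \<le> 1" using a b by (simp_all add: power_abs power_le_one)
    then have "\<bar>a^i\<bar> * \<bar>b^(m-i)\<bar> \<le> 1" by (intro mult_le_one) auto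
    then have "\<bar>c i (m-i)\<bar> * (\<bar>a^i\<bar> * \<bar>b^(m-i)\<bar>) \<le> \<bar>c i (m-i)\<bar>"
      by (rule mult_left_le) simp
    then show "\<bar>c i (m-i) * a^i * b^(m-i)\<bar> \<le> \<bar>c i (m-i)\<bar>"
      by (simp add: abs_mult mult.assoc)
  qed
  finally show ?thesis by (simp add: Ec_def)
qed

lemma Ec_summable:
  fixes c :: "nat \<Rightarrow> nat \<Rightarrow> real" and \<rho> :: real
  assumes AS: "(\<lambda>(i,j). \<bar>c i j\<bar> * \<rho>^(i+j)) summable_on UNIV"
  shows "summable (\<lambda>m. Ec c m * \<rho>^m)"
proof -
  obtain S where "((\<lambda>(i,j). \<bar>c i j\<bar> * \<rho>^(i+j)) has_sum S) UNIV" using AS summable_on_def by blast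
  then have "((\<lambda>m. \<Sum>i\<le>m. (\<lambda>(i,j). \<bar>c i j\<bar> * \<rho>^(i+j)) (i, m - i)) has_sum S) UNIV"
    by (rule diag_has_sum)
  then have s: "summable (\<lambda>m. \<Sum>i\<le>m. (\<lambda>(i,j). \<bar>c i j\<bar> * \<rho>^(i+j)) (i, m - i))"
    using has_sum_imp_sums sums_summable by blast
  moreover have "(\<Sum>i\<le>m. (\<lambda>(i,j). \<bar>c i j\<bar> * \<rho>^(i+j)) (i, m - i)) = Ec c m * \<rho>^m" for m
    by (simp add: Ec_def sum_distrib_right)
  ultimately show ?thesis by simp
qed

lemma Ec_nonneg: "0 \<le> Ec c m" by (simp add: Ec_def sum_nonneg)

lemma cubic_bound:
  fixes c :: "nat \<Rightarrow> nat \<Rightarrow> real" and \<rho> :: real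
  assumes AS: "(\<lambda>(i,j). \<bar>c i j\<bar> * \<rho>^(i+j)) summable_on UNIV" and r: "\<rho> > 0"
    and c00: "c 0 0 = 0" and c10: "c 1 0 = 0" and c01: "c 0 1 = 0"
  obtains K where "K \<ge> 0" "\<And>x y. \<bar>x\<bar> \<le> \<rho> \<Longrightarrow> \<bar>y\<bar> \<le> \<rho> \<Longrightarrow>
      \<bar>ds c x y - (c 2 0 * x^2 + c 1 1 * x * y + c 0 2 * y^2)\<bar> \<le> K * (\<bar>x\<bar> + \<bar>y\<bar>)^3"
proof -
  define G where "G m = Ec c (m+3) * \<rho>^m" for m
  have sG: "summable G"
  proof -
    have "summable (\<lambda>m. Ec c (m+3) * \<rho>^(m+3))"
      using summable_ignore_initial_segment[OF Ec_summable[OF AS], of 3] .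
    then have "summable (\<lambda>m. Ec c (m+3) * \<rho>^(m+3) / \<rho>^3)" by (rule summable_divide)
    moreover have "Ec c (m+3) * \<rho>^(m+3) / \<rho>^3 = Ec c (m+3) * \<rho>^m * \<rho>^3 / \<rho>^3" for m
      by (simp add: power_add)
    ultimately show ?thesis using r unfolding G_def by simp
  qed
  define K where "K = suminf G"
  have G0: "0 \<le> G m" for m using r Ec_nonneg by (simp add: G_def)
  have K0: "K \<ge> 0" unfolding K_def using G0 sG by (simp add: suminf_nonneg)
  show ?thesis
  proof (rule that[OF K0])
    fix x y :: real assume x: "\<bar>x\<bar> \<le> \<rho>" and y: "\<bar>y\<bar> \<le> \<rho>"
    define Q where "Q = c 2 0 * x^2 + c 1 1 * x * y + c 0 2 * y^2"
    define \<tau> where "\<tau> = max \<bar>x\<bar> \<bar>y\<bar>"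
    have t0: "0 \<le> \<tau>" and tr: "\<tau> \<le> \<rho>" and txy: "\<tau> \<le> \<bar>x\<bar> + \<bar>y\<bar>" using x y by (auto simp: \<tau>_def)
    show "\<bar>ds c x y - Q\<bar> \<le> K * (\<bar>x\<bar> + \<bar>y\<bar>)^3"
    proof (cases "\<tau> = 0")
      case True
      then have "x = 0" "y = 0" by (auto simp: \<tau>_def)
      have "ds c 0 0 = 0"
        using ds_line[OF AS, of 0 0 0] r sums_unique[OF powser_sums_zero] by (simp add: lc0 c00)
      then show ?thesis using \<open>x = 0\<close> \<open>y = 0\<close> by (simp add: Q_def)
    next
      case False
      then have tp: "\<tau> > 0" using t0 by linarith
      define a where "a = x / \<tau>"
      define b where "b = y / \<tau>"
      have a: "\<bar>a\<bar> \<le> 1" and b: "\<bar>b\<bar> \<le> 1" using tp by (auto simp: a_def b_def \<tau>_def abs_divide divide_le_eq_1)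
      have xa: "\<tau> * a = x" and yb: "\<tau> * b = y" using tp by (simp_all add: a_def b_def)
      have S: "(\<lambda>m. lc c a b m * \<tau>^m) sums ds c x y"
        using ds_line[OF AS a b, of \<tau>] tr t0 xa yb by simp
      have "(\<lambda>m. lc c a b (m+3) * \<tau>^(m+3)) sums (ds c x y - (\<Sum>m<3. lc c a b m * \<tau>^m))"
        using sums_split_initial_segment[OF S, of 3] by simp
      moreover have "(\<Sum>m<3. lc c a b m * \<tau>^m) = Q"
      proof -
        have "(\<Sum>m<3. lc c a b m * \<tau>^m) = lc c a b 0 + lc c a b 1 * \<tau> + lc c a b 2 * \<tau>^2"
          by (simp add: numeral_3_eq_3 lessThan_Suc numeral_2_eq_2 power2_eq_square)
        also have "\<dots> = Q"
          unfolding lc0 lc1 lc2 c00 c10 c01 Q_def xa[symmetric] yb[symmetric]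
          by (simp add: power2_eq_square algebra_simps)
        finally show ?thesis .
      qed
      ultimately have V: "(\<lambda>m. lc c a b (m+3) * \<tau>^(m+3)) sums (ds c x y - Q)" by simp
      have bnd: "\<bar>lc c a b (m+3) * \<tau>^(m+3)\<bar> \<le> \<tau>^3 * G m" for m
      proof -
        have "\<bar>lc c a b (m+3) * \<tau>^(m+3)\<bar> = \<bar>lc c a b (m+3)\<bar> * \<tau>^m * \<tau>^3"
          using t0 by (simp add: abs_mult power_add)
        also have "\<dots> \<le> Ec c (m+3) * \<rho>^m * \<tau>^3"
          using lc_le_Ec[OF a b, of c "m+3"] power_mono[OF tr t0, of m] t0
          by (intro mult_right_mono mult_mono) auto
        also have "\<dots> = \<tau>^3 * G m" using r by (simp add: G_def)
        finally show ?thesis .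
      qed
      have sG3: "(\<lambda>m. \<tau>^3 * G m) sums (\<tau>^3 * K)"
        unfolding K_def by (rule sums_mult[OF summable_sums[OF sG]])
      have "ds c x y - Q \<le> \<tau>^3 * K"
        by (rule sums_le[OF _ V sG3]) (use bnd in \<open>simp add: abs_le_iff\<close>)
      moreover have "-(ds c x y - Q) \<le> \<tau>^3 * K"
        by (rule sums_le[OF _ sums_minus[OF V] sG3]) (use bnd in \<open>simp add: abs_le_iff\<close>)
      ultimately have "\<bar>ds c x y - Q\<bar> \<le> \<tau>^3 * K" by linarith
      also have "\<dots> \<le> (\<bar>x\<bar> + \<bar>y\<bar>)^3 * K"
        by (rule mult_right_mono[OF power_mono[OF txy t0] K0])
      finally show ?thesis by (simp add: mult.commute)
    qed
  qed
qed


definition PS :: "(nat \<Rightarrow> real) \<Rightarrow> complex \<Rightarrow> complex" where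
  "PS c z = (\<Sum>m. complex_of_real (c m) * z^m)"

lemma abs_summable_real:
  fixes c :: "nat \<Rightarrow> real"
  assumes "summable (\<lambda>m. \<bar>c m\<bar> * \<rho>^m)" and "\<rho> \<ge> 0"
  shows "summable (\<lambda>m. c m * \<rho>^m)"
  using assms by (intro summable_rabs_cancel[of "\<lambda>m. c m * \<rho>^m"]) (simp add: abs_mult)

lemma PS_summable_K:
  fixes c :: "nat \<Rightarrow> real"
  assumes "summable (\<lambda>m. \<bar>c m\<bar> * \<rho>^m)" and "\<rho> \<ge> 0"
  shows "summable (\<lambda>m. complex_of_real (c m) * (complex_of_real \<rho>)^m)"
proof -
  have "summable (\<lambda>m. complex_of_real (c m * \<rho>^m))"
    using abs_summable_real[OF assms] by (simp only: summable_of_real)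
  then show ?thesis by simp
qed

lemma PS_deriv:
  fixes c :: "nat \<Rightarrow> real"
  assumes "summable (\<lambda>m. \<bar>c m\<bar> * \<rho>^m)" and "\<rho> \<ge> 0" and "norm z < \<rho>"
  shows "DERIV (PS c) z :> (\<Sum>n. diffs (\<lambda>m. complex_of_real (c m)) n * z^n)"
  unfolding PS_def
  by (rule termdiffs_strong[OF PS_summable_K[OF assms(1,2)]]) (use assms in simp)

lemma PS_holo:
  fixes c :: "nat \<Rightarrow> real"
  assumes "summable (\<lambda>m. \<bar>c m\<bar> * \<rho>^m)" and "\<rho> \<ge> 0"
  shows "PS c holomorphic_on ball 0 \<rho>"
proof (subst holomorphic_on_open[OF open_ball], intro ballI)
  fix z :: complex assume "z \<in> ball 0 \<rho>"
  then have "norm z < \<rho>" by simp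
  then show "\<exists>f'. DERIV (PS c) z :> f'" using PS_deriv[OF assms] by blast
qed

lemma real_ps_summable:
  fixes c :: "nat \<Rightarrow> real"
  assumes s: "summable (\<lambda>m. \<bar>c m\<bar> * \<rho>^m)" and t: "\<bar>t\<bar> \<le> \<rho>"
  shows "summable (\<lambda>m. c m * t^m)"
proof (rule summable_comparison_test[OF _ s], intro exI allI impI)
  fix m :: nat
  have "\<bar>t\<bar>^m \<le> \<rho>^m" using t by (intro power_mono) auto
  then have "\<bar>c m\<bar> * \<bar>t\<bar>^m \<le> \<bar>c m\<bar> * \<rho>^m" by (rule mult_left_mono) simp
  then show "norm (c m * t^m) \<le> \<bar>c m\<bar> * \<rho>^m" by (simp add: abs_mult power_abs)
qed

lemma PS_real:
  fixes c :: "nat \<Rightarrow> real"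
  assumes s: "summable (\<lambda>m. \<bar>c m\<bar> * \<rho>^m)" and t: "\<bar>t\<bar> < \<rho>"
  shows "PS c (complex_of_real t) = complex_of_real (\<Sum>m. c m * t^m)"
proof -
  have r: "\<rho> \<ge> 0" using t by linarith
  have "summable (\<lambda>m. c m * t^m)"
  proof (rule summable_comparison_test[OF _ s], intro exI allI impI)
    fix m :: nat
    show "norm (c m * t^m) \<le> \<bar>c m\<bar> * \<rho>^m"
    proof -
      have "\<bar>t\<bar>^m \<le> \<rho>^m" using t by (intro power_mono) auto
      then have "\<bar>c m\<bar> * \<bar>t\<bar>^m \<le> \<bar>c m\<bar> * \<rho>^m" by (rule mult_left_mono) simp
      then show ?thesis by (simp add: abs_mult power_abs)
    qed
  qed
  then have S: "(\<lambda>m. complex_of_real (c m * t^m)) sums complex_of_real (\<Sum>m. c m * t^m)"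
    by (intro sums_of_real summable_sums)
  have eq: "(\<lambda>m. complex_of_real (c m) * (complex_of_real t)^m) = (\<lambda>m. complex_of_real (c m * t^m))"
    by simp
  have "(\<lambda>m. complex_of_real (c m) * (complex_of_real t)^m) sums complex_of_real (\<Sum>m. c m * t^m)"
    unfolding eq by (rule S)
  then show ?thesis unfolding PS_def by (rule sums_unique[symmetric])
qed

lemma PS_zero: "PS c 0 = complex_of_real (c 0)"
  unfolding PS_def using sums_unique[OF powser_sums_zero[of "\<lambda>m. complex_of_real (c m)"]] by (rule sym)

lemma real_ps_cont:
  fixes c :: "nat \<Rightarrow> real"
  assumes s: "summable (\<lambda>m. \<bar>c m\<bar> * \<rho>^m)" and t: "\<bar>t\<bar> < \<rho>"
  shows "isCont (\<lambda>t. \<Sum>m. c m * t^m) t"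
  by (rule isCont_powser[OF abs_summable_real[OF s]]) (use t in auto)


lemma core:
  fixes e f :: "nat \<Rightarrow> real" and \<rho> \<delta> :: real and F :: "real \<Rightarrow> real"
  assumes r: "\<rho> > 0" and se: "summable (\<lambda>m. \<bar>e m\<bar> * \<rho>^m)" and sf: "summable (\<lambda>m. \<bar>f m\<bar> * \<rho>^m)"
    and e0: "e 0 = 0" and e1: "e 1 = 0" and e2: "e 2 > 0" and d: "\<delta> > 0"
    and FG: "\<And>t. 0 < t \<Longrightarrow> t < \<delta> \<Longrightarrow> F (\<Sum>m. e m * t^m) = (\<Sum>m. f m * t^m)"
    and F0: "F 0 = f 0"
  shows "\<exists>a \<epsilon>. \<epsilon> > 0 \<and> a 0 = f 0 \<and> (\<forall>s. 0 \<le> s \<and> s < \<epsilon> \<longrightarrow> (\<lambda>k. a k * sqrt s ^ k) sums F s)"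
proof -
  define h where "h m = e (m+2)" for m
  have sh: "summable (\<lambda>m. \<bar>h m\<bar> * \<rho>^m)"
  proof -
    have "summable (\<lambda>m. \<bar>e (m+2)\<bar> * \<rho>^(m+2))"
      using summable_ignore_initial_segment[OF se, of 2] .
    then have "summable (\<lambda>m. \<bar>e (m+2)\<bar> * \<rho>^(m+2) / \<rho>^2)" by (rule summable_divide)
    moreover have "(\<lambda>m. \<bar>e (m+2)\<bar> * \<rho>^(m+2) / \<rho>^2) = (\<lambda>m. \<bar>h m\<bar> * \<rho>^m)"
      using r by (simp add: h_def power_add power2_eq_square)
    ultimately show ?thesis by (simp only:)
  qed
  define H where "H = PS h"
  have Hholo: "H holomorphic_on ball 0 \<rho>" unfolding H_def by (rule PS_holo[OF sh]) (use r in simp)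
  have H0: "H 0 = complex_of_real (e 2)" by (simp add: H_def PS_zero h_def numeral_2_eq_2)
  have "continuous_on (ball 0 \<rho>) H" by (rule holomorphic_on_imp_continuous_on[OF Hholo])
  then have "\<forall>x\<in>ball 0 \<rho>. isCont H x" by (simp add: continuous_on_eq_continuous_at[OF open_ball])
  then have contH: "isCont H 0" by (rule bspec) (use r in simp)
  obtain d1 where d1: "d1 > 0" "\<And>z. dist z 0 < d1 \<Longrightarrow> dist (H z) (H 0) < e 2"
    using contH e2 unfolding continuous_at_eps_delta by blast
  define r1 where "r1 = min d1 \<rho>"
  have r1: "r1 > 0" "r1 \<le> \<rho>" using d1 r by (auto simp: r1_def)
  have ReH: "Re (H z) > 0" if "norm z < r1" for z
  proof -
    have "dist (H z) (H 0) < e 2" using d1(2)[of z] that by (simp add: r1_def)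
    then have "cmod (H z - complex_of_real (e 2)) < e 2" by (simp add: H0 dist_norm)
    moreover have "\<bar>Re (H z - complex_of_real (e 2))\<bar> \<le> cmod (H z - complex_of_real (e 2))"
      by (rule abs_Re_le_cmod)
    ultimately show ?thesis by simp
  qed
  define U where "U z = z * csqrt (H z)" for z
  have Hholo1: "H holomorphic_on ball 0 r1" using Hholo by (rule holomorphic_on_subset) (use r1 in auto)
  have Snp: "H z \<notin> \<real>\<^sub>\<le>\<^sub>0" if "z \<in> ball 0 r1" for z
    using ReH[of z] that by (auto simp: complex_nonpos_Reals_iff)
  have sqholo: "(\<lambda>z. csqrt (H z)) holomorphic_on ball 0 r1"
    by (rule holomorphic_on_csqrt'[OF Hholo1 Snp])
  have Uholo: "U holomorphic_on ball 0 r1"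
    unfolding U_def by (intro holomorphic_intros sqholo)
  have "DERIV (\<lambda>z. csqrt (H z)) 0 :> deriv (\<lambda>z. csqrt (H z)) 0"
    by (rule holomorphic_derivI[OF sqholo open_ball]) (use r1 in simp)
  then have "DERIV (\<lambda>z. z * csqrt (H z)) 0 :> 1 * csqrt (H 0) + deriv (\<lambda>z. csqrt (H z)) 0 * 0"
    by (rule DERIV_mult[OF DERIV_ident])
  then have "DERIV U 0 :> csqrt (H 0)" by (simp add: U_def[abs_def])
  then have dU: "deriv U 0 = csqrt (H 0)" by (rule DERIV_imp_deriv)
  have "csqrt (H 0) = complex_of_real (sqrt (e 2))" using e2 by (simp add: H0)
  then have dU0: "deriv U 0 \<noteq> 0" using dU e2 by simp
  have "0 \<in> ball (0::complex) r1" using r1 by simp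
  then obtain r2 where r2: "r2 > 0" "ball (0::complex) r2 \<subseteq> ball 0 r1" "open (U ` ball 0 r2)" "inj_on U (ball 0 r2)"
  proof (rule has_complex_derivative_locally_invertible[OF Uholo _ open_ball dU0])
    fix r assume "r > 0" "ball (0::complex) r \<subseteq> ball 0 r1" "open (U ` ball 0 r)" "inj_on U (ball 0 r)"
    then show thesis by (rule that)
  qed
  have r2r1: "r2 \<le> r1" using ball_subset_ball_iff[of "0::complex" r2 0 r1] r2(1,2) by simp
  have Uholo2: "U holomorphic_on ball 0 r2" using Uholo r2(2) by (rule holomorphic_on_subset)
  obtain V where V: "V holomorphic_on U ` ball 0 r2" "\<And>z. z \<in> ball 0 r2 \<Longrightarrow> deriv U z * deriv V (U z) = 1"
     "\<And>z. z \<in> ball 0 r2 \<Longrightarrow> V (U z) = z"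
    using holomorphic_has_inverse[OF Uholo2 open_ball r2(4)] by blast
  have U0: "U 0 = 0" by (simp add: U_def)
  have "0 \<in> U ` ball 0 r2" by (rule image_eqI[where x=0 and f=U, OF U0[symmetric]]) (use r2(1) in simp)
  then obtain \<epsilon>0 where e0p: "\<epsilon>0 > 0" and e0b: "ball 0 \<epsilon>0 \<subseteq> U ` ball 0 r2"
  proof (rule openE[OF r2(3)])
    fix e assume "0 < e" "ball (0::complex) e \<subseteq> U ` ball 0 r2"
    then show thesis by (rule that)
  qed
  have Vmap: "V w \<in> ball 0 r2" if "w \<in> U ` ball 0 r2" for w
    using that V(3) by auto
  define \<Lambda> where "\<Lambda> = PS f"
  have Lholo: "\<Lambda> holomorphic_on ball 0 \<rho>" unfolding \<Lambda>_def by (rule PS_holo[OF sf]) (use r in simp)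
  define \<Phi> where "\<Phi> = \<Lambda> \<circ> V"
  have Vsub: "V ` ball 0 \<epsilon>0 \<subseteq> ball 0 \<rho>"
  proof
    fix y assume "y \<in> V ` ball 0 \<epsilon>0"
    then obtain w where "w \<in> ball 0 \<epsilon>0" "y = V w" by blast
    then have "y \<in> ball 0 r2" using Vmap e0b by blast
    then show "y \<in> ball 0 \<rho>" using r2r1 r1 by auto
  qed
  have Pholo: "\<Phi> holomorphic_on ball 0 \<epsilon>0"
    unfolding \<Phi>_def
    by (rule holomorphic_on_compose_gen[OF holomorphic_on_subset[OF V(1) e0b] Lholo Vsub])
  define C where "C n = (deriv ^^ n) \<Phi> 0 / fact n" for n
  have PSer: "(\<lambda>n. C n * w^n) sums \<Phi> w" if "w \<in> ball 0 \<epsilon>0" for w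
    using holomorphic_power_series[OF Pholo that] by (simp add: C_def)
  define a where "a k = Re (C k)" for k
  have V0: "V 0 = 0" using V(3)[of 0] U0 r2(1) by simp
  have a0: "a 0 = f 0" by (simp add: a_def C_def \<Phi>_def V0 \<Lambda>_def PS_zero)
  define hr where "hr t = (\<Sum>m. h m * t^m)" for t
  have Hr: "H (complex_of_real t) = complex_of_real (hr t)" if "\<bar>t\<bar> < \<rho>" for t
    unfolding H_def hr_def by (rule PS_real[OF sh that])
  have hr_pos: "hr t > 0" if "\<bar>t\<bar> < r1" for t
    using ReH[of "complex_of_real t"] that Hr[of t] r1 by simp
  define u where "u t = t * sqrt (hr t)" for t
  have Ur: "U (complex_of_real t) = complex_of_real (u t)" if "\<bar>t\<bar> < r1" for t
    using Hr[of t] hr_pos[OF that] that r1 by (simp add: U_def u_def)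
  have g_eq: "(\<Sum>m. e m * t^m) = t^2 * hr t" if t: "\<bar>t\<bar> < \<rho>" for t
  proof -
    have "(\<lambda>m. h m * t^m) sums hr t"
      unfolding hr_def by (rule summable_sums[OF real_ps_summable[OF sh]]) (use t in simp)
    then have "(\<lambda>m. t^2 * (h m * t^m)) sums (t^2 * hr t)" by (rule sums_mult)
    moreover have "(\<lambda>m. t^2 * (h m * t^m)) = (\<lambda>m. e (Suc (Suc m)) * t^(Suc (Suc m)))"
      by (auto simp: h_def power2_eq_square)
    ultimately have "(\<lambda>m. e (Suc (Suc m)) * t^(Suc (Suc m))) sums (t^2 * hr t)" by (simp only:)
    then have "(\<lambda>m. e (Suc m) * t^(Suc m)) sums (t^2 * hr t + e 1 * t)"
      using sums_Suc_iff[of "\<lambda>m. e (Suc m) * t^(Suc m)"] by simp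
    then have "(\<lambda>m. e m * t^m) sums (t^2 * hr t + e 1 * t + e 0)"
      using sums_Suc_iff[of "\<lambda>m. e m * t^m"] by simp
    then show ?thesis using e0 e1 by (simp add: sums_iff)
  qed
  have gu: "(\<Sum>m. e m * t^m) = (u t)^2" if "0 \<le> t" "t < r1" for t
  proof -
    have "\<bar>t\<bar> < \<rho>" "\<bar>t\<bar> < r1" using that r1 by auto
    moreover have "hr t > 0" using hr_pos \<open>\<bar>t\<bar> < r1\<close> by blast
    ultimately show ?thesis using g_eq[of t] by (simp add: u_def power_mult_distrib)
  qed
  define \<tau> where "\<tau> = min r2 \<delta> / 2"
  have tau: "\<tau> > 0" "\<tau> < r2" "\<tau> < \<delta>" using r2(1) d by (auto simp: \<tau>_def)
  have ucont: "continuous_on {0..\<tau>} u"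
  proof (rule continuous_at_imp_continuous_on, intro ballI)
    fix t assume "t \<in> {0..\<tau>}"
    then have t: "\<bar>t\<bar> < \<rho>" "\<bar>t\<bar> < r1" using tau r2r1 r1 by auto
    have "isCont hr t" unfolding hr_def by (rule real_ps_cont[OF sh t(1)])
    then show "isCont u t" unfolding u_def by (intro continuous_intros)
  qed
  have utau: "u \<tau> > 0" using tau hr_pos[of \<tau>] r2r1 by (simp add: u_def)
  define \<epsilon> where "\<epsilon> = min \<epsilon>0 (u \<tau>)"
  have ep: "\<epsilon> > 0" using e0p utau by (simp add: \<epsilon>_def)
  show ?thesis
  proof (intro exI conjI allI impI)
    show "\<epsilon>^2 > 0" using ep by simp
    show "a 0 = f 0" by (rule a0)
    fix s assume s: "0 \<le> s \<and> s < \<epsilon>^2"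
    define \<sigma> where "\<sigma> = sqrt s"
    have sg: "0 \<le> \<sigma>" "\<sigma> < \<epsilon>" using s ep by (auto simp: \<sigma>_def real_sqrt_less_iff intro: real_less_lsqrt)
    show "(\<lambda>k. a k * sqrt s ^ k) sums F s"
    proof (cases "s = 0")
      case True
      then show ?thesis using powser_sums_zero[of a] a0 F0 by simp
    next
      case False
      then have sp: "\<sigma> > 0" using s by (simp add: \<sigma>_def)
      have "\<exists>t. 0 \<le> t \<and> t \<le> \<tau> \<and> u t = \<sigma>"
      proof (rule IVT'[OF _ _ _ ucont])
        show "u 0 \<le> \<sigma>" using sg by (simp add: u_def)
        show "\<sigma> \<le> u \<tau>" using sg unfolding \<epsilon>_def by linarith
        show "0 \<le> \<tau>" using tau by linarith
      qed
      then obtain t where t: "0 \<le> t" "t \<le> \<tau>" "u t = \<sigma>" by blast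
      have tp: "t > 0" using t sp by (cases "t = 0") (auto simp: u_def)
      have tr1: "t < r1" "\<bar>t\<bar> < r1" "\<bar>t\<bar> < \<rho>" "\<bar>t\<bar> < r2" using t tau r2r1 r1 by auto
      have "s = (u t)^2" using t s by (simp add: \<sigma>_def)
      then have Fs: "F s = (\<Sum>m. f m * t^m)"
        using FG[OF tp] gu[OF t(1) tr1(1)] tau t by simp
      have "\<Phi> (complex_of_real \<sigma>) = \<Lambda> (V (U (complex_of_real t)))"
        using Ur[OF tr1(2)] t by (simp add: \<Phi>_def)
      also have "\<dots> = \<Lambda> (complex_of_real t)" using V(3) tr1(4) by simp
      also have "\<dots> = complex_of_real (F s)" unfolding \<Lambda>_def Fs by (rule PS_real[OF sf tr1(3)])
      finally have Pv: "\<Phi> (complex_of_real \<sigma>) = complex_of_real (F s)" .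
      have inb: "complex_of_real \<sigma> \<in> ball 0 \<epsilon>0" using sg by (simp add: \<epsilon>_def)
      have "(\<lambda>n. C n * (complex_of_real \<sigma>)^n) sums complex_of_real (F s)"
        using PSer[OF inb] unfolding Pv .
      then have "(\<lambda>n. Re (C n * (complex_of_real \<sigma>)^n)) sums F s"
        by (simp add: sums_complex_iff)
      moreover have "Re (C n * (complex_of_real \<sigma>)^n) = a n * \<sigma>^n" for n
        by (simp add: a_def flip: of_real_power)
      ultimately show ?thesis by (simp add: \<sigma>_def a_def)
    qed
  qed
qed


lemma ra2_setup:
  fixes \<psi> :: "real \<times> real \<Rightarrow> real" and p :: "real \<times> real"
  assumes "real_analytic_at2 \<psi> p"
  obtains c \<rho> where "\<rho> > 0" "(\<lambda>(i,j). \<bar>c i j\<bar> * \<rho>^(i+j)) summable_on UNIV"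
    "\<And>x y. \<bar>x\<bar> < \<rho> \<Longrightarrow> \<bar>y\<bar> < \<rho> \<Longrightarrow> \<psi> (fst p + x, snd p + y) = ds c x y"
proof -
  obtain c :: "nat \<Rightarrow> nat \<Rightarrow> real" and r0 where r0: "r0 > 0" and
    H: "\<And>x y. dist (x, y) p < r0 \<Longrightarrow>
        ((\<lambda>(i, j). c i j * (x - fst p) ^ i * (y - snd p) ^ j) has_sum \<psi> (x, y)) UNIV"
    using assms unfolding real_analytic_at2_def by blast
  define \<rho> where "\<rho> = r0 / 4"
  have r: "\<rho> > 0" using r0 by (simp add: \<rho>_def)
  have dd: "dist (fst p + x, snd p + y) p < r0" if "\<bar>x\<bar> \<le> \<rho>" "\<bar>y\<bar> \<le> \<rho>" for x y
  proof -
    have "dist (fst p + x, snd p + y) p = sqrt (x^2 + y^2)" by (cases p) (simp add: dist_Pair_Pair dist_real_def)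
    also have "\<dots> \<le> \<bar>x\<bar> + \<bar>y\<bar>" by (rule sqrt_sum_squares_le_sum_abs)
    also have "\<dots> < r0" using that r0 by (simp add: \<rho>_def)
    finally show ?thesis .
  qed
  have Hs: "((\<lambda>(i, j). c i j * x ^ i * y ^ j) has_sum \<psi> (fst p + x, snd p + y)) UNIV"
    if "\<bar>x\<bar> \<le> \<rho>" "\<bar>y\<bar> \<le> \<rho>" for x y
    using H[OF dd[OF that]] by simp
  have "(\<lambda>(i, j). c i j * \<rho> ^ i * \<rho> ^ j) summable_on UNIV"
    using Hs[of \<rho> \<rho>] r summable_on_def by fastforce
  then have "(\<lambda>ij. norm ((\<lambda>(i, j). c i j * \<rho> ^ i * \<rho> ^ j) ij)) summable_on UNIV"
    using summable_on_iff_abs_summable_on_real by blast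
  moreover have "(\<lambda>ij. norm ((\<lambda>(i, j). c i j * \<rho> ^ i * \<rho> ^ j) ij)) = (\<lambda>(i,j). \<bar>c i j\<bar> * \<rho>^(i+j))"
    using r by (auto simp: abs_mult power_add)
  ultimately have AS: "(\<lambda>(i,j). \<bar>c i j\<bar> * \<rho>^(i+j)) summable_on UNIV" by simp
  show ?thesis
  proof (rule that[OF r AS])
    fix x y :: real assume "\<bar>x\<bar> < \<rho>" "\<bar>y\<bar> < \<rho>"
    then have "((\<lambda>(i, j). c i j * x ^ i * y ^ j) has_sum \<psi> (fst p + x, snd p + y)) UNIV"
      by (intro Hs) auto
    then show "\<psi> (fst p + x, snd p + y) = ds c x y" unfolding ds_def by (rule infsumI[symmetric])
  qed
qed

lemma ds00:
  fixes c :: "nat \<Rightarrow> nat \<Rightarrow> real"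
  assumes AS: "(\<lambda>(i,j). \<bar>c i j\<bar> * \<rho>^(i+j)) summable_on UNIV" and r: "\<rho> > 0"
  shows "ds c 0 0 = c 0 0"
  using ds_line[OF AS, of 0 0 0] r sums_unique[OF powser_sums_zero] by (simp add: lc0)

lemma dir_deriv:
  fixes c :: "nat \<Rightarrow> nat \<Rightarrow> real" and \<psi> :: "real \<times> real \<Rightarrow> real" and p :: "real \<times> real"
  assumes AS: "(\<lambda>(i,j). \<bar>c i j\<bar> * \<rho>^(i+j)) summable_on UNIV" and r: "\<rho> > 0"
    and psi: "\<And>x y. \<bar>x\<bar> < \<rho> \<Longrightarrow> \<bar>y\<bar> < \<rho> \<Longrightarrow> \<psi> (fst p + x, snd p + y) = ds c x y"
    and a: "\<bar>a\<bar> \<le> 1" and b: "\<bar>b\<bar> \<le> 1"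
    and grad: "(\<psi> has_derivative (\<lambda>_. 0)) (at p)"
  shows "lc c a b 1 = 0"
proof -
  define L where "L t = (fst p + t * a, snd p + t * b)" for t :: real
  have dL: "(L has_derivative (\<lambda>t. (t * a, t * b))) (at 0)"
    unfolding L_def by (auto intro!: derivative_eq_intros)
  have L0: "L 0 = p" by (simp add: L_def)
  have "((\<psi> \<circ> L) has_derivative ((\<lambda>_. 0) \<circ> (\<lambda>t. (t * a, t * b)))) (at 0)"
    by (rule diff_chain_at[OF dL]) (simp add: L0 grad)
  then have "((\<psi> \<circ> L) has_derivative (\<lambda>t. 0 * t)) (at 0)" by (simp add: o_def)
  moreover have "(\<lambda>t::real. 0 * t) = (*) (0::real)" by auto
  ultimately have D0: "DERIV (\<psi> \<circ> L) 0 :> 0" by (simp add: has_field_derivative_def)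
  have sm: "summable (\<lambda>m. lc c a b m * \<rho>^m)"
    using lc_bound[OF AS a b] r by (intro summable_rabs_cancel[of "\<lambda>m. lc c a b m * \<rho>^m"]) (simp add: abs_mult)
  have "DERIV (\<lambda>t. \<Sum>m. lc c a b m * t^m) 0 :> (\<Sum>n. diffs (lc c a b) n * 0^n)"
    by (rule termdiffs_strong[OF sm]) (use r in simp)
  moreover have "(\<Sum>n. diffs (lc c a b) n * 0^n) = lc c a b 1"
    using sums_unique[OF powser_sums_zero[of "diffs (lc c a b)"]] by (simp add: diffs_def)
  ultimately have D1: "DERIV (\<lambda>t. \<Sum>m. lc c a b m * t^m) 0 :> lc c a b 1" by simp
  have "DERIV (\<psi> \<circ> L) 0 :> lc c a b 1"
  proof (rule has_field_derivative_transform_within_open[OF D1, where S="ball 0 \<rho>"])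
    show "open (ball (0::real) \<rho>)" by simp
    show "(0::real) \<in> ball 0 \<rho>" using r by simp
    fix t :: real assume "t \<in> ball 0 \<rho>"
    then have t: "\<bar>t\<bar> < \<rho>" by simp
    have ta: "\<bar>t * a\<bar> < \<rho>" and tb: "\<bar>t * b\<bar> < \<rho>"
      using t a b by (auto simp: abs_mult intro: le_less_trans[OF mult_left_le])
    have "(\<lambda>m. lc c a b m * t^m) sums ds c (t*a) (t*b)" using ds_line[OF AS a b] t by simp
    then show "(\<Sum>m. lc c a b m * t^m) = (\<psi> \<circ> L) t"
      using psi[OF ta tb] by (simp add: L_def sums_iff)
  qed
  then show ?thesis using D0 DERIV_unique by blast
qed


lemma periodic_int:
  fixes \<gamma> :: "real \<Rightarrow> 'a"
  assumes per: "\<And>t. \<gamma> (t + 1) = \<gamma> t"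
  shows "\<gamma> (x + of_int k) = \<gamma> x"
proof -
  have nat: "\<gamma> (y + real n) = \<gamma> y" for y n
  proof (induction n)
    case 0 then show ?case by simp
  next
    case (Suc n)
    have "y + real (Suc n) = (y + real n) + 1" by simp
    then have "\<gamma> (y + real (Suc n)) = \<gamma> ((y + real n) + 1)" by (rule arg_cong)
    also have "\<dots> = \<gamma> (y + real n)" by (rule per)
    finally show ?case using Suc by simp
  qed
  show ?thesis
  proof (cases "k \<ge> 0")
    case True
    then obtain n where "k = int n" using that[of "nat k"] by (intro that[of "nat k"]) simp
    then show ?thesis using nat[of x n] by simp
  next
    case False
    then obtain n where n: "k = - int n" by (intro that[of "nat (-k)"]) simp
    have "\<gamma> ((x - real n) + real n) = \<gamma> (x - real n)" by (rule nat)
    then show ?thesis using n by simp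
  qed
qed

lemma periodic_image:
  fixes \<gamma> :: "real \<Rightarrow> 'a"
  assumes per: "\<And>t. \<gamma> (t + 1) = \<gamma> t"
  shows "\<gamma> t \<in> \<gamma> ` {0..1}"
proof -
  define s where "s = t - of_int \<lfloor>t\<rfloor>"
  have s: "0 \<le> s" "s \<le> 1" unfolding s_def by linarith+
  have "\<gamma> t = \<gamma> (s + of_int \<lfloor>t\<rfloor>)" by (simp add: s_def)
  also have "\<dots> = \<gamma> s" by (rule periodic_int) (rule per)
  finally show ?thesis using s by auto
qed

lemma quad_zero:
  fixes g1 g2 :: "real \<Rightarrow> real" and A B C K w1 w2 t0 :: real
  assumes d1: "DERIV g1 t0 :> w1" and d2: "DERIV g2 t0 :> w2"
    and ev: "eventually (\<lambda>t. \<bar>A * (g1 t - g1 t0)^2 + B * (g1 t - g1 t0) * (g2 t - g2 t0) + C * (g2 t - g2 t0)^2\<bar>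
                 \<le> K * (\<bar>g1 t - g1 t0\<bar> + \<bar>g2 t - g2 t0\<bar>)^3) (at t0)"
  shows "A * w1^2 + B * w1 * w2 + C * w2^2 = 0"
proof -
  define q1 where "q1 t = (g1 t - g1 t0) / (t - t0)" for t
  define q2 where "q2 t = (g2 t - g2 t0) / (t - t0)" for t
  have l1: "(q1 \<longlongrightarrow> w1) (at t0)" using d1 unfolding has_field_derivative_iff q1_def by simp
  have l2: "(q2 \<longlongrightarrow> w2) (at t0)" using d2 unfolding has_field_derivative_iff q2_def by simp
  have L: "((\<lambda>t. \<bar>A * (q1 t)^2 + B * q1 t * q2 t + C * (q2 t)^2\<bar>) \<longlongrightarrow> \<bar>A * w1^2 + B * w1 * w2 + C * w2^2\<bar>) (at t0)"
    by (intro tendsto_intros l1 l2)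
  have "((\<lambda>t. t - t0) \<longlongrightarrow> t0 - t0) (at t0)" by (intro tendsto_intros)
  then have z: "((\<lambda>t. \<bar>t - t0\<bar>) \<longlongrightarrow> 0) (at t0)" using tendsto_rabs by fastforce
  have R: "((\<lambda>t. K * (\<bar>q1 t\<bar> + \<bar>q2 t\<bar>)^3 * \<bar>t - t0\<bar>) \<longlongrightarrow> K * (\<bar>w1\<bar> + \<bar>w2\<bar>)^3 * 0) (at t0)"
    by (intro tendsto_intros l1 l2 z)
  have ev2: "eventually (\<lambda>t. \<bar>A * (q1 t)^2 + B * q1 t * q2 t + C * (q2 t)^2\<bar> \<le> K * (\<bar>q1 t\<bar> + \<bar>q2 t\<bar>)^3 * \<bar>t - t0\<bar>) (at t0)"
  proof -
    have ne: "eventually (\<lambda>t. t \<noteq> t0) (at t0)" by (rule eventually_neq_at_within)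
    show ?thesis using eventually_conj[OF ev ne]
    proof (rule eventually_mono)
      fix t assume H: "\<bar>A * (g1 t - g1 t0)^2 + B * (g1 t - g1 t0) * (g2 t - g2 t0) + C * (g2 t - g2 t0)^2\<bar>
                 \<le> K * (\<bar>g1 t - g1 t0\<bar> + \<bar>g2 t - g2 t0\<bar>)^3 \<and> t \<noteq> t0"
      define h where "h = t - t0"
      have h: "h \<noteq> 0" using H by (simp add: h_def)
      have e1: "g1 t - g1 t0 = q1 t * h" and e2: "g2 t - g2 t0 = q2 t * h" using h by (simp_all add: q1_def q2_def h_def)
      have "A * (g1 t - g1 t0)^2 + B * (g1 t - g1 t0) * (g2 t - g2 t0) + C * (g2 t - g2 t0)^2
            = (A * (q1 t)^2 + B * q1 t * q2 t + C * (q2 t)^2) * h^2"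
        unfolding e1 e2 by (simp add: power2_eq_square algebra_simps)
      then have "\<bar>A * (q1 t)^2 + B * q1 t * q2 t + C * (q2 t)^2\<bar> * h^2
            = \<bar>A * (g1 t - g1 t0)^2 + B * (g1 t - g1 t0) * (g2 t - g2 t0) + C * (g2 t - g2 t0)^2\<bar>"
        by (simp add: abs_mult)
      also have "\<dots> \<le> K * (\<bar>g1 t - g1 t0\<bar> + \<bar>g2 t - g2 t0\<bar>)^3" using H by simp
      also have "\<dots> = (K * (\<bar>q1 t\<bar> + \<bar>q2 t\<bar>)^3 * \<bar>h\<bar>) * h^2"
      proof -
        have "\<bar>g1 t - g1 t0\<bar> + \<bar>g2 t - g2 t0\<bar> = \<bar>h\<bar> * (\<bar>q1 t\<bar> + \<bar>q2 t\<bar>)"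
          unfolding e1 e2 by (simp add: abs_mult algebra_simps)
        moreover have "\<bar>h\<bar>^3 = \<bar>h\<bar> * h^2" by (simp add: power3_eq_cube power2_eq_square abs_mult_self_eq)
        ultimately show ?thesis by (simp add: power_mult_distrib mult_ac)
      qed
      finally have "\<bar>A * (q1 t)^2 + B * q1 t * q2 t + C * (q2 t)^2\<bar> * h^2 \<le> (K * (\<bar>q1 t\<bar> + \<bar>q2 t\<bar>)^3 * \<bar>h\<bar>) * h^2" .
      moreover have "h^2 > 0" using h by simp
      ultimately show "\<bar>A * (q1 t)^2 + B * q1 t * q2 t + C * (q2 t)^2\<bar> \<le> K * (\<bar>q1 t\<bar> + \<bar>q2 t\<bar>)^3 * \<bar>t - t0\<bar>"
        unfolding h_def by (rule mult_right_le_imp_le)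
    qed
  qed
  have "\<bar>A * w1^2 + B * w1 * w2 + C * w2^2\<bar> \<le> K * (\<bar>w1\<bar> + \<bar>w2\<bar>)^3 * 0"
    by (rule tendsto_le[OF _ R L ev2]) simp
  then show ?thesis by simp
qed

lemma quad_orth:
  fixes A B C v1 v2 w1 w2 :: real
  assumes Q: "A * w1^2 + B * w1 * w2 + C * w2^2 = 0" and w: "w1 \<noteq> 0 \<or> w2 \<noteq> 0"
    and o: "v1 * w1 + v2 * w2 = 0" and u: "v1^2 + v2^2 = 1"
  shows "A * v1^2 + B * v1 * v2 + C * v2^2 = A + C"
proof -
  define l where "l = w2 * v1 - w1 * v2"
  have e1: "w1 = - l * v2"
  proof -
    have o': "v2 * w2 = - (v1 * w1)" using o by linarith
    have "- l * v2 = w1 * v2^2 - v1 * (v2 * w2)" by (simp add: l_def power2_eq_square algebra_simps)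
    also have "\<dots> = w1 * (v1^2 + v2^2)" unfolding o' by (simp add: power2_eq_square algebra_simps)
    also have "\<dots> = w1" using u by simp
    finally show ?thesis by simp
  qed
  have e2: "w2 = l * v1"
  proof -
    have o': "v1 * w1 = - (v2 * w2)" using o by linarith
    have "l * v1 = w2 * v1^2 - v2 * (v1 * w1)" by (simp add: l_def power2_eq_square algebra_simps)
    also have "\<dots> = w2 * (v1^2 + v2^2)" unfolding o' by (simp add: power2_eq_square algebra_simps)
    also have "\<dots> = w2" using u by simp
    finally show ?thesis by simp
  qed
  have l0: "l \<noteq> 0" using w e1 e2 by auto
  have "l^2 * (A * v2^2 - B * v1 * v2 + C * v1^2) = 0"
    using Q unfolding e1 e2 by (simp add: power2_eq_square algebra_simps)
  then have z: "A * v2^2 - B * v1 * v2 + C * v1^2 = 0" using l0 by simp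
  have "A * v1^2 + B * v1 * v2 + C * v2^2 = (A * v1^2 + B * v1 * v2 + C * v2^2) + (A * v2^2 - B * v1 * v2 + C * v1^2)"
    using z by simp
  also have "\<dots> = (A + C) * (v1^2 + v2^2)" by (simp add: algebra_simps)
  finally show ?thesis using u by simp
qed

lemma odd_nonzero:
  fixes a :: "nat \<Rightarrow> real"
  assumes ep: "\<epsilon> > 0" and S: "\<forall>s. 0 \<le> s \<and> s < \<epsilon> \<longrightarrow> (\<lambda>k. a k * sqrt s ^ k) sums F s"
    and na: "\<not> real_analytic_at_0_right F"
  shows "\<exists>k. odd k \<and> a k \<noteq> 0"
proof (rule ccontr)
  assume "\<not> (\<exists>k. odd k \<and> a k \<noteq> 0)"
  then have z: "\<And>k. odd k \<Longrightarrow> a k = 0" by blast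
  have "real_analytic_at_0_right F"
    unfolding real_analytic_at_0_right_def
  proof (intro exI conjI allI impI)
    show "\<epsilon> > 0" by (rule ep)
    fix x :: real assume x: "0 \<le> x \<and> x < \<epsilon>"
    have sm: "strict_mono (\<lambda>n::nat. 2 * n)" by (rule strict_monoI) simp
    have zr: "(\<lambda>k. a k * sqrt x ^ k) n = 0" if "n \<notin> range (\<lambda>n::nat. 2 * n)" for n
    proof -
      have "odd n"
      proof (rule ccontr)
        assume "\<not> odd n"
        then have "n = 2 * (n div 2)" by simp
        then have "n \<in> range (\<lambda>n::nat. 2 * n)" by (rule image_eqI) simp
        then show False using that by simp
      qed
      then show ?thesis using z by simp
    qed
    have "(\<lambda>k. a k * sqrt x ^ k) sums F x" using S x by blast
    then have "(\<lambda>n. (\<lambda>k. a k * sqrt x ^ k) (2 * n)) sums F x"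
      using sums_mono_reindex[where f="\<lambda>k. a k * sqrt x ^ k" and c="F x", OF sm zr] by blast
    moreover have "(\<lambda>k. a k * sqrt x ^ k) (2 * n) = a (2 * n) * x ^ n" for n
      using x by (simp add: power_mult)
    ultimately show "(\<lambda>n. a (2 * n) * x ^ n) sums F x" by simp
  qed
  then show False using na by simp
qed

lemma lim_eq:
  fixes e f :: "nat \<Rightarrow> real" and F :: "real \<Rightarrow> real"
  assumes r: "\<rho> > 0" and se: "summable (\<lambda>m. \<bar>e m\<bar> * \<rho>^m)" and sf: "summable (\<lambda>m. \<bar>f m\<bar> * \<rho>^m)"
    and e0: "e 0 = 0" and d: "\<delta> > 0"
    and H: "\<And>t. 0 < t \<Longrightarrow> t < \<delta> \<Longrightarrow> (\<Sum>m. e m * t^m) \<in> {0..1} \<and> F (\<Sum>m. e m * t^m) = (\<Sum>m. f m * t^m)"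
    and Fc: "continuous_on {0..1} F"
  shows "f 0 = F 0"
proof -
  define g where "g t = (\<Sum>m. e m * t^m)" for t :: real
  define l where "l t = (\<Sum>m. f m * t^m)" for t :: real
  have g0: "g 0 = 0" unfolding g_def using sums_unique[OF powser_sums_zero[of e]] e0 by simp
  have l0: "l 0 = f 0" unfolding l_def using sums_unique[OF powser_sums_zero[of f]] by simp
  have "isCont g 0" unfolding g_def by (rule real_ps_cont[OF se]) (use r in simp)
  then have "(g \<longlongrightarrow> 0) (at 0)" using g0 by (simp add: isCont_def)
  then have gl: "(g \<longlongrightarrow> 0) (at_right 0)" by (rule tendsto_within_subset) simp
  have "isCont l 0" unfolding l_def by (rule real_ps_cont[OF sf]) (use r in simp)
  then have "(l \<longlongrightarrow> f 0) (at 0)" using l0 by (simp add: isCont_def)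
  then have ll: "(l \<longlongrightarrow> f 0) (at_right 0)" by (rule tendsto_within_subset) simp
  have evd: "eventually (\<lambda>t. 0 < t \<and> t < \<delta>) (at_right (0::real))"
    unfolding eventually_at_right_field using d by (intro exI[of _ \<delta>]) auto
  have evg: "eventually (\<lambda>t. g t \<in> {0..1}) (at_right 0)"
    using evd by (rule eventually_mono) (use H in \<open>simp add: g_def\<close>)
  have "((\<lambda>t. F (g t)) \<longlongrightarrow> F 0) (at_right 0)"
    by (rule continuous_on_tendsto_compose[OF Fc gl _ evg]) simp
  moreover have "eventually (\<lambda>t. F (g t) = l t) (at_right 0)"
    using evd by (rule eventually_mono) (use H in \<open>simp add: g_def l_def\<close>)
  ultimately have "(l \<longlongrightarrow> F 0) (at_right 0)" by (rule Lim_transform_eventually)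
  then show ?thesis using ll tendsto_unique[OF trivial_limit_at_right_real] by blast
qed


lemma dist2: "(dist a b)^2 = (fst a - fst b)^2 + (snd a - snd b)^2" for a b :: "real \<times> real"
  by (cases a, cases b) (simp add: dist_Pair_Pair dist_real_def)

theorem mainTheorem14:
  fixes \<Omega> :: "(real \<times> real) set"
    and \<psi> :: "real \<times> real \<Rightarrow> real"
    and F :: "real \<Rightarrow> real"
  assumes dom: "open \<Omega>" "connected \<Omega>" "bounded \<Omega>" "simply_connected \<Omega>"
    and bdry: "analytic_boundary \<Omega>"
    and psi_an: "\<forall>p \<in> closure \<Omega>. real_analytic_at2 \<psi> p"
    and psi_nonneg: "\<forall>p \<in> closure \<Omega>. 0 \<le> \<psi> p"
    and psi_le1: "\<forall>p \<in> \<Omega>. \<psi> p \<le> 1"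
    and pde: "\<forall>p \<in> \<Omega>. laplacian \<psi> p = F (\<psi> p)"
    and F_cont: "continuous_on {0..1} F"
    and F_an: "\<forall>s \<in> {0<..<1}. real_analytic_at F s"
    and F_not_an: "\<not> real_analytic_at_0_right F"
    and F0: "F 0 = 1"
    and bc_val: "\<forall>p \<in> frontier \<Omega>. \<psi> p = 0"
    and bc_grad: "\<forall>p \<in> frontier \<Omega>. (\<psi> has_derivative (\<lambda>_. 0)) (at p)"
  shows "\<exists>a :: nat \<Rightarrow> real. \<exists>\<epsilon> > 0.
           a 0 = 1 \<and> (\<exists>k. odd k \<and> a k \<noteq> 0) \<and>
           (\<forall>s. 0 \<le> s \<and> s < \<epsilon> \<longrightarrow> (\<lambda>k. a k * sqrt s ^ k) sums F s)"
proof -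
  obtain \<gamma> :: "real \<Rightarrow> real \<times> real" where per: "\<And>t. \<gamma> (t + 1) = \<gamma> t"
    and vd: "\<And>t. \<exists>v. v \<noteq> 0 \<and> (\<gamma> has_vector_derivative v) (at t)"
    and fr: "frontier \<Omega> = \<gamma> ` {0..1}"
    using bdry unfolding analytic_boundary_def by blast
  have frne: "frontier \<Omega> \<noteq> {}" using fr by auto
  have "\<Omega> \<noteq> {}" using frne by auto
  then obtain q where q: "q \<in> \<Omega>" by blast
  obtain p where p: "p \<in> frontier \<Omega>" and pmin: "\<And>y. y \<in> frontier \<Omega> \<Longrightarrow> dist q p \<le> dist q y"
    by (rule distance_attains_inf[OF frontier_closed frne, of q]) blast
  have qnf: "q \<notin> frontier \<Omega>" using q dom(1) by (simp add: frontier_def interior_open)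
  define R where "R = dist q p"
  have Rp: "R > 0" using p qnf by (auto simp: R_def)
  have ballsub: "ball q R \<subseteq> \<Omega>"
  proof (rule ccontr)
    assume "\<not> ball q R \<subseteq> \<Omega>"
    then have "ball q R - \<Omega> \<noteq> {}" by blast
    moreover have "q \<in> ball q R" using Rp by simp
    then have "ball q R \<inter> \<Omega> \<noteq> {}" using q by blast
    ultimately have "ball q R \<inter> frontier \<Omega> \<noteq> {}"
      using connected_Int_frontier[OF connected_ball] by blast
    then obtain y where "y \<in> ball q R" "y \<in> frontier \<Omega>" by blast
    then show False using pmin[of y] by (simp add: R_def)
  qed
  have pcl: "p \<in> closure \<Omega>" using p by (simp add: frontier_def)
  obtain c \<rho> where r: "\<rho> > 0" and AS: "(\<lambda>(i,j). \<bar>c i j\<bar> * \<rho>^(i+j)) summable_on UNIV"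
    and psi: "\<And>x y. \<bar>x\<bar> < \<rho> \<Longrightarrow> \<bar>y\<bar> < \<rho> \<Longrightarrow> \<psi> (fst p + x, snd p + y) = ds c x y"
    by (rule ra2_setup[OF bspec[OF psi_an pcl]]) (rule that)
  have c00: "c 0 0 = 0"
  proof -
    have "\<psi> p = ds c 0 0" using psi[of 0 0] r by simp
    then show ?thesis using ds00[OF AS r] bc_val p by simp
  qed
  have grad: "(\<psi> has_derivative (\<lambda>_. 0)) (at p)" using bc_grad p by blast
  have "lc c 1 0 1 = 0" by (rule dir_deriv[OF AS r psi _ _ grad]) simp_all
  then have c10: "c 1 0 = 0" using lc1[of c 1 0] by simp
  have "lc c 0 1 1 = 0" by (rule dir_deriv[OF AS r psi _ _ grad]) simp_all
  then have c01: "c 0 1 = 0" using lc1[of c 0 1] by simp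
  obtain K where K0: "K \<ge> 0" and K: "\<And>x y. \<bar>x\<bar> \<le> \<rho> \<Longrightarrow> \<bar>y\<bar> \<le> \<rho> \<Longrightarrow>
      \<bar>ds c x y - (c 2 0 * x^2 + c 1 1 * x * y + c 0 2 * y^2)\<bar> \<le> K * (\<bar>x\<bar> + \<bar>y\<bar>)^3"
    by (rule cubic_bound[OF AS r c00 c10 c01]) (rule that)
  obtain t0 where t0: "\<gamma> t0 = p" using p fr by auto
  obtain w where w: "w \<noteq> 0" "(\<gamma> has_vector_derivative w) (at t0)" using vd by blast
  define g1 where "g1 t = fst (\<gamma> t)" for t
  define g2 where "g2 t = snd (\<gamma> t)" for t
  have hd: "(\<gamma> has_derivative (\<lambda>h. h *\<^sub>R w)) (at t0)" using w(2) by (simp add: has_vector_derivative_def)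
  have "(g1 has_derivative (\<lambda>h. fst (h *\<^sub>R w))) (at t0)" unfolding g1_def by (rule has_derivative_fst[OF hd])
  moreover have "(\<lambda>h. fst (h *\<^sub>R w)) = (*) (fst w)" by auto
  ultimately have d1: "DERIV g1 t0 :> fst w" by (simp add: has_field_derivative_def)
  have "(g2 has_derivative (\<lambda>h. snd (h *\<^sub>R w))) (at t0)" unfolding g2_def by (rule has_derivative_snd[OF hd])
  moreover have "(\<lambda>h. snd (h *\<^sub>R w)) = (*) (snd w)" by auto
  ultimately have d2: "DERIV g2 t0 :> snd w" by (simp add: has_field_derivative_def)
  have gfr: "\<gamma> t \<in> frontier \<Omega>" for t using periodic_image[where \<gamma>=\<gamma> and t=t, OF per] fr by simp
  have gpt: "\<gamma> t = (g1 t, g2 t)" for t by (simp add: g1_def g2_def)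
  have g0: "g1 t0 = fst p" "g2 t0 = snd p" using t0 by (auto simp: g1_def g2_def)
  define \<phi> where "\<phi> t = (g1 t - fst q)^2 + (g2 t - snd q)^2" for t
  have D: "DERIV \<phi> t0 :> 2 * (g1 t0 - fst q) * fst w + 2 * (g2 t0 - snd q) * snd w"
    unfolding \<phi>_def by (auto intro!: derivative_eq_intros d1 d2 simp: algebra_simps)
  have M: "\<forall>y. \<bar>t0 - y\<bar> < 1 \<longrightarrow> \<phi> t0 \<le> \<phi> y"
  proof (intro allI impI)
    fix y
    have "\<phi> y = (dist q (\<gamma> y))^2" by (simp add: dist2 \<phi>_def gpt power2_commute)
    moreover have "\<phi> t0 = (dist q (\<gamma> t0))^2" by (simp add: dist2 \<phi>_def gpt power2_commute)
    moreover have "dist q (\<gamma> t0) \<le> dist q (\<gamma> y)" using pmin[OF gfr[of y]] t0 by simp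
    ultimately show "\<phi> t0 \<le> \<phi> y" by (simp add: power_mono)
  qed
  have "2 * (g1 t0 - fst q) * fst w + 2 * (g2 t0 - snd q) * snd w = 0"
    using DERIV_local_min[OF D _ M] by simp
  then have orth0: "(fst q - fst p) * fst w + (snd q - snd p) * snd w = 0"
    using g0 by (simp add: algebra_simps)
  have "isCont g1 t0" by (rule DERIV_isCont[OF d1])
  then have "eventually (\<lambda>t. dist (g1 t) (g1 t0) < \<rho>) (at t0)"
    using r by (auto simp: isCont_def intro: tendstoD)
  moreover have "isCont g2 t0" by (rule DERIV_isCont[OF d2])
  then have "eventually (\<lambda>t. dist (g2 t) (g2 t0) < \<rho>) (at t0)"
    using r by (auto simp: isCont_def intro: tendstoD)
  ultimately have ev: "eventually (\<lambda>t. \<bar>c 2 0 * (g1 t - g1 t0)^2 + c 1 1 * (g1 t - g1 t0) * (g2 t - g2 t0) + c 0 2 * (g2 t - g2 t0)^2\<bar>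
                 \<le> K * (\<bar>g1 t - g1 t0\<bar> + \<bar>g2 t - g2 t0\<bar>)^3) (at t0)"
  proof (rule eventually_elim2)
    fix t assume a1: "dist (g1 t) (g1 t0) < \<rho>" and a2: "dist (g2 t) (g2 t0) < \<rho>"
    define x where "x = g1 t - g1 t0"
    define y where "y = g2 t - g2 t0"
    have x: "\<bar>x\<bar> < \<rho>" and y: "\<bar>y\<bar> < \<rho>" using a1 a2 by (simp_all add: x_def y_def dist_real_def)
    have "\<gamma> t = (fst p + x, snd p + y)" using gpt g0 by (simp add: x_def y_def)
    then have "ds c x y = 0" using psi[OF x y] bc_val gfr[of t] by simp
    then show "\<bar>c 2 0 * (g1 t - g1 t0)^2 + c 1 1 * (g1 t - g1 t0) * (g2 t - g2 t0) + c 0 2 * (g2 t - g2 t0)^2\<bar>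
                 \<le> K * (\<bar>g1 t - g1 t0\<bar> + \<bar>g2 t - g2 t0\<bar>)^3"
      using K[of x y] x y by (simp add: x_def y_def)
  qed
  have Qw: "c 2 0 * (fst w)^2 + c 1 1 * fst w * snd w + c 0 2 * (snd w)^2 = 0"
    by (rule quad_zero[OF d1 d2 ev])
  define v1 where "v1 = (fst q - fst p) / R"
  define v2 where "v2 = (snd q - snd p) / R"
  have R2: "R^2 = (fst q - fst p)^2 + (snd q - snd p)^2" unfolding R_def by (rule dist2)
  have "v1^2 + v2^2 = ((fst q - fst p)^2 + (snd q - snd p)^2) / R^2"
    by (simp add: v1_def v2_def power_divide add_divide_distrib)
  also have "\<dots> = 1" unfolding R2[symmetric] using Rp by simp
  finally have u: "v1^2 + v2^2 = 1" .
  have "v1 * fst w + v2 * snd w = ((fst q - fst p) * fst w + (snd q - snd p) * snd w) / R"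
    by (simp add: v1_def v2_def add_divide_distrib)
  then have o: "v1 * fst w + v2 * snd w = 0" using orth0 by simp
  have wnz: "fst w \<noteq> 0 \<or> snd w \<noteq> 0" using w(1) by (auto simp: prod_eq_iff)
  have Qv: "c 2 0 * v1^2 + c 1 1 * v1 * v2 + c 0 2 * v2^2 = c 2 0 + c 0 2"
    by (rule quad_orth[OF Qw wnz o u])
  have v1: "\<bar>v1\<bar> \<le> 1" and v2: "\<bar>v2\<bar> \<le> 1"
    using u by (simp_all add: abs_square_le_1[symmetric]) (smt (verit) zero_le_power2)+
  define e where "e = lc c v1 v2"
  define f where "f = lc (lapc c) v1 v2"
  have r2: "\<rho>/2 > 0" using r by simp
  have se: "summable (\<lambda>m. \<bar>e m\<bar> * (\<rho>/2)^m)"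
  proof (rule summable_comparison_test[OF _ lc_bound[OF AS v1 v2, of]])
    show "\<exists>N. \<forall>n\<ge>N. norm (\<bar>e n\<bar> * (\<rho>/2)^n) \<le> \<bar>lc c v1 v2 n\<bar> * \<rho>^n"
    proof (intro exI allI impI)
      fix n :: nat
      have "(\<rho>/2)^n \<le> \<rho>^n" using r by (intro power_mono) auto
      then show "norm (\<bar>e n\<bar> * (\<rho>/2)^n) \<le> \<bar>lc c v1 v2 n\<bar> * \<rho>^n"
        using r by (simp add: e_def abs_mult mult_left_mono)
    qed
  qed (use r in simp)
  have sf: "summable (\<lambda>m. \<bar>f m\<bar> * (\<rho>/2)^m)"
    unfolding f_def by (rule lc_bound[OF AS_lapc[OF AS r] v1 v2]) (use r in simp)
  define P where "P t = (fst p + t * v1, snd p + t * v2)" for t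
  have tv: "\<bar>t * v1\<bar> \<le> \<bar>t\<bar>" "\<bar>t * v2\<bar> \<le> \<bar>t\<bar>" for t
    using v1 v2 by (auto simp: abs_mult intro: mult_left_le)
  have Gs: "(\<lambda>m. e m * t^m) sums \<psi> (P t)" if t: "\<bar>t\<bar> \<le> \<rho>/2" for t
  proof -
    have "\<bar>t\<bar> \<le> \<rho>" "\<bar>t * v1\<bar> < \<rho>" "\<bar>t * v2\<bar> < \<rho>" using t r tv[of t] by linarith+
    then show ?thesis using ds_line[OF AS v1 v2, of t] psi[of "t * v1" "t * v2"]
      by (simp add: e_def P_def mult.commute)
  qed
  have Ls: "(\<lambda>m. f m * t^m) sums laplacian \<psi> (P t)" if t: "\<bar>t\<bar> \<le> \<rho>/2" for t
  proof -
    have a: "\<bar>t * v1\<bar> \<le> \<rho>/2" "\<bar>t * v2\<bar> \<le> \<rho>/2" using t tv[of t] by linarith+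
    have "laplacian \<psi> (P t) = ds (lapc c) (t * v1) (t * v2)"
      unfolding P_def by (rule lap_ds[OF AS r psi a])
    then show ?thesis using ds_line[OF AS_lapc[OF AS r] v1 v2 t] by (simp add: f_def)
  qed
  define \<delta> where "\<delta> = min (\<rho>/2) R"
  have dp: "\<delta> > 0" using r Rp by (simp add: \<delta>_def)
  have PO: "P t \<in> \<Omega>" if "0 < t" "t < \<delta>" for t
  proof -
    have "(dist q (P t))^2 = (fst q - fst p - t * v1)^2 + (snd q - snd p - t * v2)^2"
      by (simp add: dist2 P_def algebra_simps)
    also have "\<dots> = (R * v1 - t * v1)^2 + (R * v2 - t * v2)^2" using Rp by (simp add: v1_def v2_def)
    also have "\<dots> = (R - t)^2 * (v1^2 + v2^2)" by (simp add: power2_eq_square algebra_simps)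
    finally have "(dist q (P t))^2 = (R - t)^2" using u by simp
    then have "dist q (P t) = R - t" using that by (simp add: \<delta>_def power2_eq_iff_nonneg)
    then have "P t \<in> ball q R" using that by simp
    then show ?thesis using ballsub by blast
  qed
  have H: "(\<Sum>m. e m * t^m) \<in> {0..1} \<and> F (\<Sum>m. e m * t^m) = (\<Sum>m. f m * t^m)" if "0 < t" "t < \<delta>" for t
  proof -
    have t: "\<bar>t\<bar> \<le> \<rho>/2" using that by (simp add: \<delta>_def)
    have "P t \<in> \<Omega>" by (rule PO[OF that])
    moreover have "\<Omega> \<subseteq> closure \<Omega>" by (rule closure_subset)
    ultimately show ?thesis using Gs[OF t] Ls[OF t] pde psi_le1 psi_nonneg by (auto simp: sums_iff)
  qed
  have e0: "e 0 = 0" by (simp add: e_def lc0 c00)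
  have "f 0 = F 0" by (rule lim_eq[OF r2 se sf e0 dp H F_cont])
  then have cs: "c 2 0 + c 0 2 = 1/2" using F0 by (simp add: f_def lc0 lapc00)
  have e1: "e 1 = 0" unfolding e_def lc1 using c10 c01 by simp
  have e2: "e 2 > 0" unfolding e_def lc2 using Qv cs by (simp add: algebra_simps)
  have FG: "F (\<Sum>m. e m * t^m) = (\<Sum>m. f m * t^m)" if "0 < t" "t < \<delta>" for t using H[OF that] by blast
  have f0: "F 0 = f 0" using \<open>f 0 = F 0\<close> by simp
  obtain a \<epsilon> where ep: "\<epsilon> > 0" and a0: "a 0 = f 0" and S: "\<forall>s. 0 \<le> s \<and> s < \<epsilon> \<longrightarrow> (\<lambda>k. a k * sqrt s ^ k) sums F s"
    using core[OF r2 se sf e0 e1 e2 dp FG f0] by blast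
  have "\<exists>k. odd k \<and> a k \<noteq> 0" by (rule odd_nonzero[OF ep S F_not_an])
  then show ?thesis using ep a0 S F0 \<open>f 0 = F 0\<close> by auto
qed


end
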